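(* Suppose that the Collatz map $T$ has no cycle of positive integers other than the trivial cycle $\{1,2\}$. Then the operator $\mathcal{T}$ on $H_{ber}^2(D)/X$ is hypercyclic, i.e. there exists a vector $v\in H_{ber}^2(D)/X$ whose orbit $\{\mathcal{T}^n v: n\ge 0\}$ is dense in $H_{ber}^2(D)/X$.
   Context: $T:\mathbb{Z}\to\mathbb{Z}$ is the (reduced) Collatz map: $T(n)=\frac{3n+1}{2}$ for odd $n$ and $T(n)=\frac n2$ for even $n$. A cycle is a finite set $\{n_1,\dots,n_k\}$ with $T(n_i)=n_{i+1}$, $T(n_k)=n_1$. $D$ is the open unit disk. $H_{ber}^2(D)$ is the Bergman space of holomorphic $f$ on $D$ with $\|f\|^2=\int_D|f|^2\,dA<\infty$ (so $\|z^n\|^2=\frac{\pi}{n+1}$). The operator $\mathcal{T}$ acts on power series by $\sum_{n\ge0} a_nz^n\mapsto\sum_{n\ge0} a_n z^{T(n)}$ (equivalently $\mathcal{T}f(z)=(Sf)(\sqrt z)+\sqrt z\,(Af)(z^{3/2})$ with $S,A$ the even and odd parts of $f$); it is bounded on $H_{ber}^2(D)$, leaves $X=\operatorname{span}\{1,z,z^2\}$ invariant, and induces a bounded operator on the quotient Banach space $H_{ber}^2(D)/X$, still denoted $\mathcal{T}$. *)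

theory Defs
  imports "HOL-Analysis.Analysis"
begin

definition collatz :: "int \<Rightarrow> int" where
  "collatz n = (if even n then n div 2 else (3 * n + 1) div 2)"

definition collatz_cycle :: "int set \<Rightarrow> bool" where
  "collatz_cycle C \<longleftrightarrow> (\<exists>ns. ns \<noteq> [] \<and> distinct ns \<and> set ns = C \<and>
      (\<forall>i < length ns. collatz (ns ! i) = ns ! ((i + 1) mod length ns)))"

definition collatz_nat :: "nat \<Rightarrow> nat" where
  "collatz_nat n = nat (collatz (int n))"

definition bergman :: "(complex \<Rightarrow> complex) set" where
  "bergman = {f. f holomorphic_on ball 0 1 \<and>
                 (\<lambda>z. (cmod (f z))\<^sup>2) integrable_on ball 0 1}"

definition berg_norm :: "(complex \<Rightarrow> complex) \<Rightarrow> real" where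
  "berg_norm f = sqrt (integral (ball 0 1) (\<lambda>z. (cmod (f z))\<^sup>2))"

definition taylor_coeff :: "(complex \<Rightarrow> complex) \<Rightarrow> nat \<Rightarrow> complex" where
  "taylor_coeff f n = (deriv ^^ n) f 0 / of_nat (fact n)"

definition collatz_op :: "(complex \<Rightarrow> complex) \<Rightarrow> (complex \<Rightarrow> complex)" where
  "collatz_op f = (\<lambda>z. \<Sum>n. taylor_coeff f n * z ^ collatz_nat n)"

definition polyX :: "(complex \<Rightarrow> complex) set" where
  "polyX = {p. \<exists>a b c. p = (\<lambda>z. a + b * z + c * z\<^sup>2)}"

text \<open>Distance in the quotient Banach space H_ber^2(D)/X between the classes of u and w.\<close>
definition quot_dist :: "(complex \<Rightarrow> complex) \<Rightarrow> (complex \<Rightarrow> complex) \<Rightarrow> real" where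
  "quot_dist u w = Inf {berg_norm (\<lambda>z. u z - w z - p z) | p. p \<in> polyX}"

end

theory Submission
  imports Defs "HOL-Complex_Analysis.Complex_Analysis"
begin



definition cL :: "real^2 \<Rightarrow> complex" where "cL v = Complex (v$1) (v$2)"

lemma cL_borel[measurable]: "cL \<in> borel_measurable borel"
  unfolding cL_def
  by (intro borel_measurable_continuous_onI continuous_intros) 

lemma box_complex_iff: "x \<in> box (l::complex) u \<longleftrightarrow> Re l < Re x \<and> Re x < Re u \<and> Im l < Im x \<and> Im x < Im u"
  by (auto simp: box_def Basis_complex_def)

lemma prod_Basis_2: "(\<Prod>bb\<in>(Basis::(real^2) set). (x::real^2) \<bullet> bb) = x$1 * x$2"
proof -
  have "(\<Prod>bb\<in>(Basis::(real^2) set). x \<bullet> bb) = (\<Prod>i\<in>UNIV. x$i)"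
    by (simp add: Basis_vec_def cart_eq_inner_axis axis_eq_axis prod.UNION_disjoint)
  also have "\<dots> = x$1 * x$2" by (simp add: UNIV_2)
  finally show ?thesis .
qed

lemma all_Basis_2: "(\<forall>bb\<in>(Basis::(real^2) set). (a::real^2) \<bullet> bb \<le> b \<bullet> bb) \<longleftrightarrow> a$1 \<le> b$1 \<and> a$2 \<le> b$2"
  by (auto simp: Basis_vec_def cart_eq_inner_axis forall_2)

lemma distr_cL: "distr lborel borel cL = lborel"
proof (rule lborel_eqI[symmetric])
  fix l u :: complex
  assume le: "\<And>b. b \<in> Basis \<Longrightarrow> l \<bullet> b \<le> u \<bullet> b"
  define a :: "real^2" where "a = (\<chi> i. if i = 1 then Re l else Im l)"
  define b :: "real^2" where "b = (\<chi> i. if i = 1 then Re u else Im u)"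
  have a1: "a$1 = Re l" "a$2 = Im l" "b$1 = Re u" "b$2 = Im u" by (auto simp: a_def b_def)
  have pre: "cL -` box l u = box a b"
    by (auto simp: cL_def box_complex_iff mem_box_cart forall_2 a1)
  have le2: "Re l \<le> Re u" "Im l \<le> Im u" using le[of 1] le[of \<i>] by (auto simp: Basis_complex_def)
  have "emeasure (distr lborel borel cL) (box l u) = emeasure lborel (box a b)"
    by (subst emeasure_distr) (auto simp: pre)
  also have "\<dots> = (Re u - Re l) * (Im u - Im l)"
    using le2 by (simp add: emeasure_lborel_box_eq all_Basis_2 prod_Basis_2 a1)
  finally show "emeasure (distr lborel borel cL) (box l u) = (\<Prod>b\<in>Basis. (u - l) \<bullet> b)"
    by (simp add: Basis_complex_def)
qed simp



definition rot :: "real \<Rightarrow> real \<Rightarrow> real^2 \<Rightarrow> real^2" where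
  "rot a b v = (\<chi> i. if i = 1 then a * v$1 - b * v$2 else b * v$1 + a * v$2)"

lemma rot_nth[simp]: "rot a b v $ 1 = a * v$1 - b * v$2" "rot a b v $ 2 = b * v$1 + a * v$2"
  by (auto simp: rot_def)

lemma linear_rot: "linear (rot a b)"
  by (rule linearI) (auto simp: vec_eq_iff forall_2 algebra_simps)

lemma norm_vec2: "norm (v::real^2) = sqrt ((v$1)^2 + (v$2)^2)"
  by (simp add: norm_vec_def L2_set_def UNIV_2)

lemma orth_rot: assumes "a^2 + b^2 = 1" shows "orthogonal_transformation (rot a b)"
proof -
  have "norm (rot a b v) = norm v" for v
  proof -
    have "(a * v$1 - b * v$2)^2 + (b * v$1 + a * v$2)^2 = (a^2+b^2) * ((v$1)^2 + (v$2)^2)"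
      by (simp add: power2_eq_square algebra_simps)
    then show ?thesis using assms by (simp add: norm_vec2)
  qed
  then show ?thesis by (simp add: orthogonal_transformation linear_rot)
qed

lemma rot_inv: assumes "a^2 + b^2 = 1" shows "rot a (-b) (rot a b v) = v"
proof -
  have "a * (a * x - b * y) + b * (b * x + a * y) = (a^2+b^2) * x" for x y
    by (simp add: power2_eq_square algebra_simps)
  moreover have "- b * (a * x - b * y) + a * (b * x + a * y) = (a^2+b^2) * y" for x y
    by (simp add: power2_eq_square algebra_simps)
  ultimately show ?thesis using assms by (simp add: vec_eq_iff forall_2)
qed

lemma bl_rot: "bounded_linear (rot a b)"
  using linear_rot linear_conv_bounded_linear by blast

lemma cont_rot: "continuous_on S (rot a b)"
  by (simp add: linear_continuous_on bl_rot)

lemma rot_borel[measurable]: "rot a b \<in> borel_measurable borel"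
  by (intro borel_measurable_continuous_onI cont_rot) 

lemma distr_rot: assumes ab: "a^2 + b^2 = 1" shows "distr lborel borel (rot a b) = lborel"
proof (rule lborel_eqI[symmetric])
  fix l u :: "real^2"
  have ab': "a^2 + (-b)^2 = 1" using ab by simp
  have pre: "rot a b -` box l u = rot a (-b) ` box l u"
  proof
    show "rot a b -` box l u \<subseteq> rot a (- b) ` box l u"
      using rot_inv[OF ab] by (auto intro!: image_eqI)
    show "rot a (- b) ` box l u \<subseteq> rot a b -` box l u"
      using rot_inv[OF ab', simplified] by auto
  qed
  have op: "open (rot a b -` box l u)"
    by (intro open_vimage open_box cont_rot) 
  have bm: "rot a b -` box l u \<in> sets borel" using op by auto
  have "emeasure (distr lborel borel (rot a b)) (box l u) = emeasure lborel (rot a b -` box l u)"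
    by (subst emeasure_distr) auto
  also have "\<dots> = emeasure lebesgue (rot a (-b) ` box l u)"
    using bm pre by (simp add: emeasure_completion)
  also have "\<dots> = measure lebesgue (rot a (-b) ` box l u)"
    by (rule emeasure_eq_measure2) (simp add: measurable_orthogonal_image[OF orth_rot[OF ab']])
  also have "\<dots> = measure lebesgue (box l u)"
    using measure_orthogonal_image[OF orth_rot[OF ab'], of "box l u"] by simp
  also have "\<dots> = emeasure lborel (box l u)"
    by (simp add: emeasure_eq_measure2 measure_completion) 
  finally show "emeasure (distr lborel borel (rot a b)) (box l u) = (\<Prod>b\<in>Basis. (u - l) \<bullet> b)"
    if "\<And>b. b \<in> Basis \<Longrightarrow> l \<bullet> b \<le> u \<bullet> b"
    using that by (simp add: emeasure_lborel_box_eq)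
qed simp




lemma cis_mult_cL: "cis x * cL v = cL (rot (cos x) (sin x) v)"
  by (simp add: cL_def cis.ctr complex_eq_iff)

lemma distr_cis: "distr lborel borel (\<lambda>z. cis x * z) = (lborel :: complex measure)"
proof -
  have ab: "(cos x)^2 + (sin x)^2 = 1" by simp
  have m: "(\<lambda>z. cis x * z) \<in> borel_measurable (borel :: complex measure)" by measurable
  have "distr lborel borel (\<lambda>z. cis x * z) = distr (distr lborel borel cL) borel (\<lambda>z. cis x * z)"
    by (simp add: distr_cL)
  also have "\<dots> = distr lborel borel ((\<lambda>z. cis x * z) \<circ> cL)"
    by (rule distr_distr) (auto simp: m)
  also have "(\<lambda>z. cis x * z) \<circ> cL = cL \<circ> rot (cos x) (sin x)"
    by (simp add: fun_eq_iff cis_mult_cL)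
  also have "distr lborel borel (cL \<circ> rot (cos x) (sin x)) = distr (distr lborel borel (rot (cos x) (sin x))) borel cL"
    by (rule distr_distr[symmetric]) auto
  also have "\<dots> = lborel" by (simp add: distr_rot[OF ab] distr_cL)
  finally show ?thesis .
qed

lemma integral_cis_invariant:
  fixes f :: "complex \<Rightarrow> 'b::{banach, second_countable_topology}"
  assumes [measurable]: "f \<in> borel_measurable borel"
  shows "(\<integral>z. f (cis x * z) \<partial>lborel) = (\<integral>z. f z \<partial>lborel)"
proof -
  have "(\<integral>z. f z \<partial>lborel) = (\<integral>z. f z \<partial>(distr lborel borel (\<lambda>z. cis x * z)))"
    by (simp add: distr_cis)
  also have "\<dots> = (\<integral>z. f (cis x * z) \<partial>lborel)"
    by (rule integral_distr) auto
  finally show ?thesis by (simp add: cis.ctr complex_eq_iff)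
qed

lemma ball_cis: "cis x * z \<in> ball 0 r \<longleftrightarrow> z \<in> ball 0 r"
  by (simp add: norm_mult)

lemma pred_ball[measurable]: "Measurable.pred borel (\<lambda>x::complex. x \<in> ball 0 r)"
  by (simp add: pred_def borel_open)

lemma mono_borel[measurable]: "(\<lambda>x::complex. x^n * cnj x^m) \<in> borel_measurable borel"
  by (intro borel_measurable_continuous_onI continuous_intros)

definition mint :: "real \<Rightarrow> nat \<Rightarrow> nat \<Rightarrow> complex" where
  "mint r n m = (\<integral>z. indicator (ball 0 r) z *\<^sub>R (z^n * cnj z^m) \<partial>lborel)"

lemma mint_orth: assumes "n \<noteq> m" shows "mint r n m = 0"
proof -
  define k where "k = (if n > m then n - m else m - n)"
  define x where "x = pi / real k"
  have kpos: "k > 0" using assms by (auto simp: k_def)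
  have fac: "cis x ^ n * cnj (cis x) ^ m = -1"
  proof -
    have "cis x ^ n * cnj (cis x) ^ m = cis ((real n - real m) * x)"
      using Complex.DeMoivre[of x n] Complex.DeMoivre[of "-x" m] by (simp add: cis_cnj cis_mult algebra_simps)
    also have "(real n - real m) * x = (if n > m then pi else - pi)"
      using kpos by (auto simp: x_def k_def of_nat_diff field_simps)
    finally show ?thesis by (simp add: cis.ctr complex_eq_iff)
  qed
  define f where "f z = indicator (ball 0 r) z *\<^sub>R (z^n * cnj z^m)" for z :: complex
  have fm[measurable]: "f \<in> borel_measurable borel" unfolding f_def by measurable
  have "f (cis x * z) = (cis x ^ n * cnj (cis x) ^ m) * f z" for z
    by (simp add: f_def ball_cis indicator_def power_mult_distrib norm_mult)
  hence "(\<integral>z. f (cis x * z) \<partial>lborel) = - (\<integral>z. f z \<partial>lborel)"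
    by (simp add: fac)
  with integral_cis_invariant[OF fm, of x] have "(\<integral>z. f z \<partial>lborel) = 0" by simp
  thus ?thesis by (simp add: mint_def f_def)
qed




definition Wr :: "real \<Rightarrow> nat \<Rightarrow> real" where
  "Wr r n = (\<integral>z. indicator (ball 0 r) (z::complex) * norm z ^ (2*n) \<partial>lborel)"

lemma integrable_ball_cont:
  fixes g :: "complex \<Rightarrow> 'b::{banach, second_countable_topology}"
  assumes "continuous_on (cball 0 r) g" and [measurable]: "g \<in> borel_measurable borel"
  shows "integrable lborel (\<lambda>z. indicator (ball 0 r) z *\<^sub>R g z)"
proof -
  have I: "integrable lborel (\<lambda>z. indicator (cball 0 r) z *\<^sub>R g z)"
    by (rule borel_integrable_compact) (use assms in auto)
  show ?thesis
    apply (rule Bochner_Integration.integrable_bound[OF I])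
     apply measurable
    apply (auto simp: indicator_def)
    done
qed

lemma cnorm_sq: "complex_of_real (norm w ^ 2) = w * cnj w"
  by (rule complex_norm_square)

lemma zn_cnj: "z^n * cnj z^n = complex_of_real (norm z ^ (2*n))"
proof -
  have "z^n * cnj z^n = (z * cnj z)^n" by (simp add: power_mult_distrib)
  also have "z * cnj z = complex_of_real (norm z^2)" by (rule complex_norm_square[symmetric])
  finally show ?thesis by (simp add: power_mult)
qed

lemma mint_diag: "mint r n n = complex_of_real (Wr r n)"
proof -
  have "(\<lambda>z::complex. indicator (ball 0 r) z *\<^sub>R (z^n * cnj z^n)) = (\<lambda>z. complex_of_real (indicator (ball 0 r) z * norm z ^ (2*n)))"
    by (auto simp: fun_eq_iff zn_cnj scaleR_conv_of_real)
  then show ?thesis unfolding mint_def Wr_def by (simp only: integral_complex_of_real)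
qed

lemma integrable_mono[simp]: "integrable lborel (\<lambda>z::complex. indicator (ball 0 r) z *\<^sub>R (z^n * cnj z^m))"
  by (rule integrable_ball_cont) (auto intro!: continuous_intros)

lemma poly_norm_sq:
  fixes c :: "nat \<Rightarrow> complex"
  shows "(\<integral>z. indicator (ball 0 r) z * norm (\<Sum>n<N. c n * z^n)^2 \<partial>lborel) = (\<Sum>n<N. norm (c n)^2 * Wr r n)"
proof -
  have eq: "complex_of_real (indicator (ball 0 r) z * norm (\<Sum>n<N. c n * z^n)^2) =
     (\<Sum>n<N. \<Sum>m<N. (c n * cnj (c m)) * (indicator (ball 0 r) z *\<^sub>R (z^n * cnj z^m)))" for z :: complex
  proof -
    have "complex_of_real (norm (\<Sum>n<N. c n * z^n)^2) = (\<Sum>n<N. c n * z^n) * cnj (\<Sum>m<N. c m * z^m)"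
      by (rule cnorm_sq)
    also have "\<dots> = (\<Sum>n<N. \<Sum>m<N. (c n * cnj (c m)) * (z^n * cnj z^m))"
      by (simp add: sum_product mult_ac)
    finally show ?thesis
      by (simp add: scaleR_conv_of_real sum_distrib_left sum_distrib_right mult_ac indicator_def)
  qed
  have "complex_of_real (\<integral>z. indicator (ball 0 r) z * norm (\<Sum>n<N. c n * z^n)^2 \<partial>lborel)
      = (\<integral>z. (\<Sum>n<N. \<Sum>m<N. (c n * cnj (c m)) * (indicator (ball 0 r) z *\<^sub>R (z^n * cnj z^m))) \<partial>lborel)"
    unfolding integral_complex_of_real[symmetric] eq ..
  also have "\<dots> = (\<Sum>n<N. \<Sum>m<N. (c n * cnj (c m)) * mint r n m)"
  proof (rule has_bochner_integral_integral_eq)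
    show "has_bochner_integral lborel (\<lambda>z. \<Sum>n<N. \<Sum>m<N. (c n * cnj (c m)) * (indicator (ball 0 r) z *\<^sub>R (z^n * cnj z^m)))
       (\<Sum>n<N. \<Sum>m<N. (c n * cnj (c m)) * mint r n m)"
      unfolding mint_def
      by (intro has_bochner_integral_sum has_bochner_integral_mult_right has_bochner_integral_integrable integrable_mono)
  qed
  also have "\<dots> = (\<Sum>n<N. (c n * cnj (c n)) * mint r n n)"
  proof (rule sum.cong[OF refl])
    fix n assume "n \<in> {..<N}"
    then show "(\<Sum>m<N. (c n * cnj (c m)) * mint r n m) = (c n * cnj (c n)) * mint r n n"
      by (subst sum.remove[of _ n]) (auto simp: mint_orth intro!: sum.neutral)
  qed
  also have "\<dots> = complex_of_real (\<Sum>n<N. norm (c n)^2 * Wr r n)"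
    by (simp add: mint_diag complex_norm_square[symmetric])
  finally show ?thesis by (simp only: of_real_eq_iff)
qed




definition ps :: "(nat \<Rightarrow> complex) \<Rightarrow> complex \<Rightarrow> complex" where
  "ps c z = (\<Sum>n. c n * z ^ n)"

lemma Wr_nonneg: "0 \<le> Wr r n"
  unfolding Wr_def by (rule integral_nonneg_AE) auto

lemma ps_sums: assumes "ereal (norm z) < conv_radius c" shows "(\<lambda>n. c n * z^n) sums ps c z"
  unfolding ps_def using summable_in_conv_radius[OF assms] by (simp add: summable_sums)

lemma ps_bound:
  fixes c :: "nat \<Rightarrow> complex" and z :: complex
  assumes "ereal r < conv_radius c" "norm z \<le> r"
  shows "norm (\<Sum>n<N. c n * z^n) \<le> (\<Sum>n. norm (c n) * r^n)"
proof -
  have r0: "0 \<le> r" using assms(2) norm_ge_zero order_trans by blast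
  have sm: "summable (\<lambda>n. norm (c n) * r^n)"
    using abs_summable_in_conv_radius[of "complex_of_real r" c] assms r0 by (simp add: norm_mult norm_power)
  have "norm (\<Sum>n<N. c n * z^n) \<le> (\<Sum>n<N. norm (c n) * r^n)"
    by (rule order_trans[OF norm_sum sum_mono]) (auto simp: norm_mult norm_power intro!: mult_left_mono power_mono assms)
  also have "\<dots> \<le> (\<Sum>n. norm (c n) * r^n)"
    using sm r0 by (intro sum_le_suminf) auto
  finally show ?thesis .
qed

lemma ps_sq_lim:
  assumes "ereal R \<le> conv_radius c" "r \<le> R"
  shows "(\<lambda>N. indicator (ball 0 r) z * norm (\<Sum>n<N. c n * z^n)^2) \<longlonglongrightarrow> indicator (ball 0 r) z * norm (ps c z)^2"
proof (cases "z \<in> ball 0 r")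
  case True
  then have "ereal (norm z) < conv_radius c" using assms
    by (metis dist_0_norm less_ereal.simps(1) mem_ball order_less_le_trans order_le_less_trans)
  from ps_sums[OF this] have "(\<lambda>N. \<Sum>n<N. c n * z^n) \<longlonglongrightarrow> ps c z" by (simp add: sums_def)
  then have "(\<lambda>N. norm (\<Sum>n<N. c n * z^n)^2) \<longlonglongrightarrow> norm (ps c z)^2"
    by (intro tendsto_intros)
  then show ?thesis using True by simp
qed simp

lemma ps_sq_meas:
  assumes "ereal R \<le> conv_radius c" "r \<le> R"
  shows "(\<lambda>z. indicator (ball 0 r) z * norm (ps c z)^2) \<in> borel_measurable borel"
proof (rule borel_measurable_LIMSEQ_real)
  show "(\<lambda>N. indicator (ball 0 r) z * norm (\<Sum>n<N. c n * z^n)^2) \<longlonglongrightarrow> indicator (ball 0 r) z * norm (ps c z)^2" for z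
    by (rule ps_sq_lim[OF assms])
  show "(\<lambda>z. indicator (ball 0 r) z * norm (\<Sum>n<N. c n * z^n)^2) \<in> borel_measurable borel" for N
  proof -
    have "(\<lambda>z::complex. norm (\<Sum>n<N. c n * z^n)^2) \<in> borel_measurable borel"
      by (intro borel_measurable_continuous_onI continuous_intros)
    then show ?thesis by measurable
  qed
qed

lemma ps_disc_both:
  assumes "0 < r" "ereal r < conv_radius c"
  shows "integrable lborel (\<lambda>z. indicator (ball 0 r) z * norm (ps c z)^2) \<and>
    (\<lambda>n. norm (c n)^2 * Wr r n) sums (\<integral>z. indicator (ball 0 r) z * norm (ps c z)^2 \<partial>lborel)"
proof -
  define B where "B = (\<Sum>n. norm (c n) * r^n)"
  have m1: "(\<lambda>z. indicator (ball 0 r) z * norm (ps c z)^2) \<in> borel_measurable lborel"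
      using ps_sq_meas[of r c r] assms by simp
  have m2: "(\<lambda>z. indicator (ball 0 r) z * norm (\<Sum>n<N. c n * z^n)^2) \<in> borel_measurable lborel" for N
  proof -
    have "(\<lambda>z::complex. norm (\<Sum>n<N. c n * z^n)^2) \<in> borel_measurable borel"
      by (intro borel_measurable_continuous_onI continuous_intros)
    then show ?thesis by measurable
  qed
  have i3: "integrable lborel (\<lambda>z::complex. indicator (ball 0 r) z * B^2)"
    using emeasure_lborel_ball_finite[of "0::complex" r]
    by (intro integrable_mult_left integrable_real_indicator) auto
  have l4: "AE z in lborel. (\<lambda>N. indicator (ball 0 r) z * norm (\<Sum>n<N. c n * z^n)^2) \<longlonglongrightarrow> indicator (ball 0 r) z * norm (ps c z)^2"
    using ps_sq_lim[of r c r] assms by auto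
  have b5: "AE z in lborel. norm (indicator (ball 0 r) z * norm (\<Sum>n<N. c n * z^n)^2) \<le> indicator (ball 0 r) z * B^2" for N
  proof (rule AE_I2)
    fix z :: complex
    show "norm (indicator (ball 0 r) z * norm (\<Sum>n<N. c n * z^n)^2) \<le> indicator (ball 0 r) z * B^2"
    proof (cases "z \<in> ball 0 r")
      case True
      then have "norm (\<Sum>n<N. c n * z^n) \<le> B" unfolding B_def
        by (intro ps_bound assms) auto
      then have "norm (\<Sum>n<N. c n * z^n)^2 \<le> B^2" by (intro power_mono) auto
      then show ?thesis using True by simp
    qed simp
  qed
  have lim: "(\<lambda>N. \<integral>z. indicator (ball 0 r) z * norm (\<Sum>n<N. c n * z^n)^2 \<partial>lborel) \<longlonglongrightarrow> (\<integral>z. indicator (ball 0 r) z * norm (ps c z)^2 \<partial>lborel)"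
    by (rule integral_dominated_convergence[OF m1 m2 i3 l4 b5])
  have int: "integrable lborel (\<lambda>z. indicator (ball 0 r) z * norm (ps c z)^2)"
    by (rule integrable_dominated_convergence[OF m1 m2 i3 l4 b5])
  from lim int show ?thesis
    by (simp add: sums_def poly_norm_sq)
qed

lemma ps_disc:
  assumes "0 < r" "ereal r < conv_radius c"
  shows "(\<lambda>n. norm (c n)^2 * Wr r n) sums (\<integral>z. indicator (ball 0 r) z * norm (ps c z)^2 \<partial>lborel)"
  using ps_disc_both[OF assms] by blast

lemma ps_disc_int:
  assumes "0 < r" "ereal r < conv_radius c"
  shows "integrable lborel (\<lambda>z. indicator (ball 0 r) z * norm (ps c z)^2)"
  using ps_disc_both[OF assms] by blast




definition rk :: "nat \<Rightarrow> real" where "rk k = 1 - 1 / (real k + 2)"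

lemma rk_pos: "0 < rk k" and rk_less1: "rk k < 1"
  by (auto simp: rk_def field_simps)

lemma rk_mono: "k \<le> l \<Longrightarrow> rk k \<le> rk l"
  by (auto simp: rk_def field_simps)

lemma rk_ev: assumes "norm (z::complex) < 1" shows "\<exists>k. norm z < rk k"
proof -
  obtain k where "1 / (1 - norm z) < real k" using reals_Archimedean2 by blast
  then have "norm z < rk k" using assms by (auto simp: rk_def field_simps)
  then show ?thesis ..
qed

lemma Wr_mono: assumes "r \<le> r'" shows "Wr r n \<le> Wr r' n"
  unfolding Wr_def
proof (rule integral_mono)
  show "integrable lborel (\<lambda>z::complex. indicator (ball 0 r) z * norm z ^ (2*n))"
    using integrable_ball_cont[of r "\<lambda>z::complex. norm z ^ (2*n)"] by (auto intro!: continuous_intros)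
  show "integrable lborel (\<lambda>z::complex. indicator (ball 0 r') z * norm z ^ (2*n))"
    using integrable_ball_cont[of r' "\<lambda>z::complex. norm z ^ (2*n)"] by (auto intro!: continuous_intros)
  show "indicator (ball 0 r) z * norm z ^ (2*n) \<le> indicator (ball 0 r') z * norm z ^ (2*n)" for z :: complex
    using assms by (auto simp: indicator_def)
qed

lemma nn_SUP_rk:
  fixes G :: "complex \<Rightarrow> real"
  assumes G0: "\<And>z. 0 \<le> G z" and meas: "\<And>k. (\<lambda>z. indicator (ball 0 (rk k)) z * G z) \<in> borel_measurable borel"
  shows "(\<integral>\<^sup>+z. ennreal (indicator (ball 0 1) z * G z) \<partial>lborel) = (SUP k. \<integral>\<^sup>+z. ennreal (indicator (ball 0 (rk k)) z * G z) \<partial>lborel)"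
proof -
  have eq: "(SUP k. ennreal (indicator (ball 0 (rk k)) z * G z)) = ennreal (indicator (ball 0 1) z * G z)" for z
  proof (cases "norm z < 1")
    case True
    then obtain k where k: "norm z < rk k" using rk_ev by blast
    show ?thesis
    proof (rule antisym)
      show "(SUP k. ennreal (indicator (ball 0 (rk k)) z * G z)) \<le> ennreal (indicator (ball 0 1) z * G z)"
        using True G0[of z] rk_less1 by (intro SUP_least) (auto simp: indicator_def)
      show "ennreal (indicator (ball 0 1) z * G z) \<le> (SUP k. ennreal (indicator (ball 0 (rk k)) z * G z))"
        using True k by (intro SUP_upper2[of k]) (auto simp: indicator_def)
    qed
  next
    case False
    then have "z \<notin> ball 0 (rk k)" for k using rk_less1[of k] by auto
    then show ?thesis using False by (simp add: indicator_def)
  qed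
  have "(\<integral>\<^sup>+z. ennreal (indicator (ball 0 1) z * G z) \<partial>lborel) = (\<integral>\<^sup>+z. (SUP k. ennreal (indicator (ball 0 (rk k)) z * G z)) \<partial>lborel)"
    by (simp add: eq)
  also have "\<dots> = (SUP k. \<integral>\<^sup>+z. ennreal (indicator (ball 0 (rk k)) z * G z) \<partial>lborel)"
  proof (rule nn_integral_monotone_convergence_SUP)
    show "incseq (\<lambda>k z. ennreal (indicator (ball 0 (rk k)) z * G z))"
    proof (intro incseq_SucI le_funI)
      fix k z
      show "ennreal (indicator (ball 0 (rk k)) z * G z) \<le> ennreal (indicator (ball 0 (rk (Suc k))) z * G z)"
        using G0[of z] rk_mono[of k "Suc k"] by (auto simp: indicator_def intro!: ennreal_leI)
    qed
    show "(\<lambda>z. ennreal (indicator (ball 0 (rk k)) z * G z)) \<in> borel_measurable lborel" for k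
      using meas[of k] by measurable
  qed
  finally show ?thesis .
qed

definition wt :: "nat \<Rightarrow> real" where "wt n = Wr 1 n"

lemma integrable_Wr: "integrable lborel (\<lambda>z::complex. indicator (ball 0 r) z * norm z ^ (2*n))"
  using integrable_ball_cont[of r "\<lambda>z::complex. norm z ^ (2*n)"] by (auto intro!: continuous_intros)

lemma ennreal_Wr: "(\<integral>\<^sup>+z. ennreal (indicator (ball 0 r) z * norm (z::complex) ^ (2*n)) \<partial>lborel) = ennreal (Wr r n)"
  unfolding Wr_def by (rule nn_integral_eq_integral[OF integrable_Wr]) auto

lemma wt_SUP: "ennreal (wt n) = (SUP k. ennreal (Wr (rk k) n))"
proof -
  have "ennreal (wt n) = (\<integral>\<^sup>+z. ennreal (indicator (ball 0 1) z * norm (z::complex) ^ (2*n)) \<partial>lborel)"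
    by (simp add: ennreal_Wr wt_def)
  also have "\<dots> = (SUP k. \<integral>\<^sup>+z. ennreal (indicator (ball 0 (rk k)) z * norm (z::complex) ^ (2*n)) \<partial>lborel)"
    by (rule nn_SUP_rk) auto
  finally show ?thesis by (simp add: ennreal_Wr)
qed

lemma ps_full:
  assumes "1 \<le> conv_radius c"
  shows "(\<integral>\<^sup>+z. ennreal (indicator (ball 0 1) z * norm (ps c z)^2) \<partial>lborel) = (\<Sum>n. ennreal (norm (c n)^2 * wt n))"
proof -
  have cr: "ereal (rk k) < conv_radius c" for k
    using rk_less1[of k] assms by (metis less_ereal.simps(1) one_ereal_def order_less_le_trans)
  have "(\<integral>\<^sup>+z. ennreal (indicator (ball 0 1) z * norm (ps c z)^2) \<partial>lborel)
     = (SUP k. \<integral>\<^sup>+z. ennreal (indicator (ball 0 (rk k)) z * norm (ps c z)^2) \<partial>lborel)"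
  proof (rule nn_SUP_rk)
    have cr1: "ereal 1 \<le> conv_radius c" using assms by (simp add: one_ereal_def)
    show "(\<lambda>z. indicator (ball 0 (rk k)) z * norm (ps c z)^2) \<in> borel_measurable borel" for k
      using ps_sq_meas[OF cr1, of "rk k"] rk_less1[of k] by simp
  qed auto
  also have "\<dots> = (SUP k. ennreal (\<Sum>n. norm (c n)^2 * Wr (rk k) n))"
  proof (rule SUP_cong[OF refl])
    fix k
    have int: "integrable lborel (\<lambda>z. indicator (ball 0 (rk k)) z * norm (ps c z)^2)"
      by (rule ps_disc_int[OF rk_pos cr])
    have "(\<integral>\<^sup>+z. ennreal (indicator (ball 0 (rk k)) z * norm (ps c z)^2) \<partial>lborel)
        = ennreal (\<integral>z. indicator (ball 0 (rk k)) z * norm (ps c z)^2 \<partial>lborel)"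
      by (rule nn_integral_eq_integral[OF int]) auto
    also have "\<dots> = ennreal (\<Sum>n. norm (c n)^2 * Wr (rk k) n)"
      using ps_disc[OF rk_pos cr] by (simp add: sums_iff)
    finally show "(\<integral>\<^sup>+z. ennreal (indicator (ball 0 (rk k)) z * norm (ps c z)^2) \<partial>lborel) = ennreal (\<Sum>n. norm (c n)^2 * Wr (rk k) n)" .
  qed
  also have "\<dots> = (SUP k. \<Sum>n. ennreal (norm (c n)^2 * Wr (rk k) n))"
    using ps_disc[OF rk_pos cr] by (simp add: suminf_ennreal2 sums_iff Wr_nonneg)
  also have "\<dots> = (\<Sum>n. SUP k. ennreal (norm (c n)^2 * Wr (rk k) n))"
    by (rule ennreal_suminf_SUP_eq[symmetric])
       (auto simp: incseq_def intro!: ennreal_leI mult_left_mono Wr_mono rk_mono)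
  also have "\<dots> = (\<Sum>n. ennreal (norm (c n)^2 * wt n))"
  proof (rule suminf_cong)
    fix n
    have "(SUP k. ennreal (norm (c n)^2 * Wr (rk k) n)) = (SUP k. ennreal (norm (c n)^2) * ennreal (Wr (rk k) n))"
      by (simp add: ennreal_mult Wr_nonneg)
    also have "\<dots> = ennreal (norm (c n)^2) * (SUP k. ennreal (Wr (rk k) n))"
      by (simp add: SUP_mult_left_ennreal)
    also have "\<dots> = ennreal (norm (c n)^2 * wt n)"
      by (simp add: wt_SUP[symmetric] ennreal_mult wt_def Wr_nonneg)
    finally show "(SUP k. ennreal (norm (c n)^2 * Wr (rk k) n)) = ennreal (norm (c n)^2 * wt n)" .
  qed
  finally show ?thesis .
qed




lemma wt_nonneg: "0 \<le> wt n" by (simp add: wt_def Wr_nonneg)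

lemma wt_Suc: "wt (Suc n) \<le> wt n"
  unfolding wt_def Wr_def
proof (rule integral_mono)
  show "integrable lborel (\<lambda>z::complex. indicator (ball 0 1) z * norm z ^ (2*Suc n))" by (rule integrable_Wr)
  show "integrable lborel (\<lambda>z::complex. indicator (ball 0 1) z * norm z ^ (2*n))" by (rule integrable_Wr)
  show "indicator (ball 0 1) z * norm z ^ (2*Suc n) \<le> indicator (ball 0 1) z * norm z ^ (2*n)" for z :: complex
  proof (cases "norm z < 1")
    case True
    have "norm z ^ (2*n) * (norm z)^2 \<le> norm z ^ (2*n) * 1"
      using True by (intro mult_left_mono) (auto simp: power_le_one)
    then have ineq: "norm z ^ (2*n) * (norm z)^2 \<le> norm z ^ (2*n)" by simp
    have ind: "indicator (ball 0 1) z = (1::real)" using True by simp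
    have eq:  "norm z ^ (2*Suc n) = norm z^(2*n) * (norm z)^2"
    proof -
      have "norm z ^ (2*Suc n) = norm z ^ (2*n + 2)" by simp
      also have "\<dots> = norm z^(2*n) * (norm z)^2" by (rule power_add)
      finally show ?thesis .
    qed
    show ?thesis unfolding eq ind mult_1_left by (rule ineq)
  qed (simp add: indicator_def)
qed

lemma wt_antimono: "m \<le> n \<Longrightarrow> wt n \<le> wt m"
  by (induction n rule: dec_induct) (auto intro: order_trans[OF wt_Suc])

lemma wt_lim: "wt \<longlonglongrightarrow> 0"
proof -
  have m1: "(\<lambda>z::complex. 0::real) \<in> borel_measurable lborel" by simp
  have m2: "(\<lambda>z::complex. indicator (ball 0 1) z * norm z ^ (2*n)) \<in> borel_measurable lborel" for n
    by measurable
  have i3: "integrable lborel (indicator (ball (0::complex) 1) :: complex \<Rightarrow> real)"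
    using emeasure_lborel_ball_finite[of "0::complex" 1] by (intro integrable_real_indicator) auto
  have l4: "AE z in lborel. (\<lambda>n. indicator (ball 0 1) z * norm (z::complex) ^ (2*n)) \<longlonglongrightarrow> 0"
  proof (rule AE_I2)
    fix z :: complex
    show "(\<lambda>n. indicator (ball 0 1) z * norm z ^ (2*n)) \<longlonglongrightarrow> 0"
    proof (cases "norm z < 1")
      case True
      have "(\<lambda>n. ((norm z)^2) ^ n) \<longlonglongrightarrow> 0"
        using True by (intro LIMSEQ_power_zero) (auto simp: abs_square_less_1)
      then show ?thesis using True by (simp add: power_mult)
    qed (simp add: indicator_def)
  qed
  have b5: "AE z in lborel. norm (indicator (ball 0 1) z * norm (z::complex) ^ (2*n)) \<le> indicator (ball 0 1) z" for n
    by (rule AE_I2) (auto simp: indicator_def power_le_one)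
  have "(\<lambda>n. \<integral>z. indicator (ball 0 1) z * norm (z::complex) ^ (2*n) \<partial>lborel) \<longlonglongrightarrow> (\<integral>z. (0::real) \<partial>(lborel::complex measure))"
    by (rule integral_dominated_convergence[OF m1 m2 i3 l4 b5])
  moreover have "wt = (\<lambda>n. \<integral>z. indicator (ball 0 1) z * norm (z::complex) ^ (2*n) \<partial>lborel)"
    by (simp add: fun_eq_iff wt_def Wr_def)
  ultimately show ?thesis by simp
qed

lemma wt_lower:
  assumes "0 < \<rho>" "\<rho> < 1"
  shows "\<exists>A>0. \<forall>n. A * \<rho>^(2*n) \<le> wt n"
proof -
  define D where "D = ball (0::complex) 1 - cball 0 \<rho>"
  define A where "A = measure lborel D"
  have Dsets: "D \<in> sets lborel" unfolding D_def by auto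
  have Dfin: "emeasure lborel D < \<infinity>"
    using emeasure_lborel_ball_finite[of "0::complex" 1] emeasure_mono[of D "ball 0 1" lborel]
    by (auto simp: D_def)
  have "A > 0"
  proof -
    define c where "c = complex_of_real ((1 + \<rho>) / 2)"
    have sub: "ball c ((1 - \<rho>)/2) \<subseteq> D"
    proof
      fix z assume "z \<in> ball c ((1 - \<rho>)/2)"
      then have "norm (z - c) < (1 - \<rho>)/2" by (simp add: dist_norm norm_minus_commute)
      moreover have "norm c = (1 + \<rho>)/2" unfolding c_def norm_of_real using assms by simp
      moreover have "norm c \<le> norm z + norm (z - c)" and "norm z \<le> norm c + norm (z - c)"
        using norm_triangle_sub[of c z] norm_triangle_sub[of z c] by (auto simp: norm_minus_commute)
      ultimately show "z \<in> D" by (auto simp: D_def)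
    qed
    have "0 < measure lborel (ball c ((1 - \<rho>)/2))" using assms content_ball_pos[of "(1 - \<rho>)/2" c] by auto
    also have "\<dots> \<le> A" unfolding A_def
      using sub Dsets Dfin by (intro measure_mono_fmeasurable) (auto simp: fmeasurable_def)
    finally show ?thesis .
  qed
  moreover have "A * \<rho>^(2*n) \<le> wt n" for n
  proof -
    have "A * \<rho>^(2*n) = (\<integral>z. indicator D z * \<rho>^(2*n) \<partial>lborel)"
      using Dsets Dfin by (simp add: A_def)
    also have "\<dots> \<le> wt n" unfolding wt_def Wr_def
    proof (rule integral_mono)
      show "integrable lborel (\<lambda>z. indicator D z * \<rho> ^ (2 * n))"
        using Dsets Dfin by (intro integrable_mult_left integrable_real_indicator) auto
      show "integrable lborel (\<lambda>z::complex. indicator (ball 0 1) z * norm z ^ (2*n))" by (rule integrable_Wr)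
      show "indicator D z * \<rho> ^ (2 * n) \<le> indicator (ball 0 1) z * norm z ^ (2*n)" for z
        using assms by (auto simp: D_def indicator_def intro!: power_mono)
    qed
    finally show ?thesis .
  qed
  ultimately show ?thesis by blast
qed




lemma taylor_sums:
  assumes "f holomorphic_on ball 0 1" "z \<in> ball 0 1"
  shows "(\<lambda>n. taylor_coeff f n * z^n) sums f z"
  using holomorphic_power_series[OF assms] by (simp add: taylor_coeff_def)

lemma taylor_conv:
  assumes "f holomorphic_on ball 0 1"
  shows "1 \<le> conv_radius (taylor_coeff f)"
proof -
  have "ereal 1 \<le> conv_radius (taylor_coeff f)"
  proof (rule conv_radius_geI_ex')
    fix r :: real assume "0 < r" "ereal r < ereal 1"
    then have "complex_of_real r \<in> ball 0 1" by simp
    from taylor_sums[OF assms this] show "summable (\<lambda>n. taylor_coeff f n * complex_of_real r ^ n)"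
      by (rule sums_summable)
  qed
  then show ?thesis by (simp add: one_ereal_def)
qed

lemma taylor_ps:
  assumes "f holomorphic_on ball 0 1" "z \<in> ball 0 1"
  shows "f z = ps (taylor_coeff f) z"
  using taylor_sums[OF assms] by (simp add: ps_def sums_iff)

lemma ps_has_integral:
  assumes cr: "1 \<le> conv_radius c" and eq: "\<And>z. z \<in> ball 0 1 \<Longrightarrow> h z = ps c z"
    and sm: "summable (\<lambda>n. norm (c n)^2 * wt n)"
  shows "((\<lambda>z. (cmod (h z))^2) has_integral (\<Sum>n. norm (c n)^2 * wt n)) (ball 0 1)"
proof -
  have cr1: "ereal 1 \<le> conv_radius c" using cr by (simp add: one_ereal_def)
  have "((\<lambda>z. indicator (ball 0 1) z * norm (ps c z)^2) has_integral (\<Sum>n. norm (c n)^2 * wt n)) UNIV"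
  proof (rule nn_integral_has_integral)
    show "(\<lambda>z. indicator (ball 0 1) z * norm (ps c z)^2) \<in> borel_measurable borel"
      using ps_sq_meas[OF cr1, of 1] by simp
    show "(\<integral>\<^sup>+z. ennreal (indicator (ball 0 1) z * norm (ps c z)^2) \<partial>lborel) = ennreal (\<Sum>n. norm (c n)^2 * wt n)"
      using ps_full[OF cr] sm by (simp add: suminf_ennreal2 wt_nonneg)
    show "0 \<le> (\<Sum>n. norm (c n)^2 * wt n)"
      using sm by (intro suminf_nonneg) (auto simp: wt_nonneg)
  qed auto
  then have "((\<lambda>z. if z \<in> ball 0 1 then (cmod (h z))^2 else 0) has_integral (\<Sum>n. norm (c n)^2 * wt n)) UNIV"
    by (rule has_integral_cong[THEN iffD1, rotated]) (auto simp: indicator_def eq)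
  then show ?thesis by (simp only: has_integral_restrict_UNIV)
qed

lemma ps_integrable_summable:
  assumes cr: "1 \<le> conv_radius c" and eq: "\<And>z. z \<in> ball 0 1 \<Longrightarrow> h z = ps c z"
    and int: "(\<lambda>z. (cmod (h z))^2) integrable_on ball 0 1"
  shows "summable (\<lambda>n. norm (c n)^2 * wt n)"
proof (rule summable_suminf_not_top)
  show "0 \<le> norm (c n)^2 * wt n" for n by (simp add: wt_nonneg)
  have "integral\<^sup>N lborel (\<lambda>x. indicator (ball 0 1) x * (cmod (h x))^2) = integral (ball 0 1) (\<lambda>z. (cmod (h z))^2)"
    by (rule nn_integral_has_integral_lebesgue) (use int in auto)
  moreover have "integral\<^sup>N lborel (\<lambda>x. indicator (ball 0 1) x * (cmod (h x))^2) = (\<integral>\<^sup>+z. ennreal (indicator (ball 0 1) z * norm (ps c z)^2) \<partial>lborel)"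
    by (rule nn_integral_cong) (auto simp: indicator_def eq)
  ultimately show "(\<Sum>n. ennreal (norm (c n)^2 * wt n)) \<noteq> top"
    using ps_full[OF cr] by simp
qed



lemma collatz_nat_eq: "collatz_nat n = (if even n then n div 2 else (3*n+1) div 2)"
proof (cases "even n")
  case True
  then have "collatz (int n) = int (n div 2)" by (simp add: collatz_def zdiv_int)
  then show ?thesis using True by (simp add: collatz_nat_def)
next
  case False
  then have "collatz (int n) = int ((3*n+1) div 2)" by (simp add: collatz_def zdiv_int)
  then show ?thesis using False by (simp add: collatz_nat_def)
qed

lemma collatz_int_nat: "collatz (int n) = int (collatz_nat n)"
  by (cases "even n") (simp_all add: collatz_def collatz_nat_eq zdiv_int)

lemma collatz_nat_pos: "1 \<le> n \<Longrightarrow> 1 \<le> collatz_nat n"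
  by (auto simp: collatz_nat_eq elim!: evenE)

lemma funpow_pos: "1 \<le> n \<Longrightarrow> 1 \<le> (collatz_nat ^^ k) n"
proof (induction k)
  case (Suc k)
  then show ?case using collatz_nat_pos[of "(collatz_nat^^k) n"] by simp
qed simp

lemma small_closed: "n < 3 \<Longrightarrow> collatz_nat n < 3"
  by (auto simp: collatz_nat_eq less_Suc_eq numeral_3_eq_3)

lemma small_stays: assumes "k \<le> k'" "(collatz_nat ^^ k) n < 3" shows "(collatz_nat ^^ k') n < 3"
  using assms(1)
proof (induction k' rule: dec_induct)
  case base
  then show ?case using assms(2) .
next
  case (step k')
  then show ?case by (simp add: small_closed)
qed

lemma periodic_cycle:
  assumes H: "\<forall>C. collatz_cycle C \<and> C \<subseteq> {0<..} \<longrightarrow> C = {1, 2}"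
    and x: "1 \<le> x" and p: "0 < p" "(collatz_nat ^^ p) x = x"
  shows "x < 3"
proof -
  let ?T = "collatz_nat"
  define q where "q = (LEAST q. 0 < q \<and> (?T ^^ q) x = x)"
  have q: "0 < q" "(?T ^^ q) x = x" using LeastI[of "\<lambda>q. 0 < q \<and> (?T ^^ q) x = x" p] p by (auto simp: q_def)
  have qmin: "\<And>r. 0 < r \<Longrightarrow> r < q \<Longrightarrow> (?T ^^ r) x \<noteq> x"
    using not_less_Least q_def by blast
  define ns where "ns = map (\<lambda>i. int ((?T ^^ i) x)) [0..<q]"
  have len: "length ns = q" by (simp add: ns_def)
  have nth: "i < q \<Longrightarrow> ns ! i = int ((?T ^^ i) x)" for i by (simp add: ns_def)
  have dist: "distinct ns"
  proof -
    have "inj_on (\<lambda>i. (?T ^^ i) x) {0..<q}"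
    proof (rule inj_onI)
      fix i j assume ij: "i \<in> {0..<q}" "j \<in> {0..<q}" "(?T ^^ i) x = (?T ^^ j) x"
      show "i = j"
      proof (rule ccontr)
        assume "i \<noteq> j"
        then consider "i < j" | "j < i" by linarith
        then show False
        proof cases
          case 1
          have r: "0 < q - j + i" "q - j + i < q" using 1 ij by auto
          have "(?T ^^ (q - j + i)) x = (?T ^^ (q - j)) ((?T ^^ i) x)" by (simp add: funpow_add)
          also have "\<dots> = (?T ^^ (q - j)) ((?T ^^ j) x)" using ij by simp
          also have "\<dots> = (?T ^^ ((q - j) + j)) x" by (simp only: funpow_add comp_apply)
          also have "\<dots> = (?T ^^ q) x" using ij by simp
          also have "\<dots> = x" by (rule q(2))
          finally show False using qmin[OF r] by simp
        next
          case 2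
          have r: "0 < q - i + j" "q - i + j < q" using 2 ij by auto
          have "(?T ^^ (q - i + j)) x = (?T ^^ (q - i)) ((?T ^^ j) x)" by (simp add: funpow_add)
          also have "\<dots> = (?T ^^ (q - i)) ((?T ^^ i) x)" using ij by simp
          also have "\<dots> = (?T ^^ ((q - i) + i)) x" by (simp only: funpow_add comp_apply)
          also have "\<dots> = (?T ^^ q) x" using ij by simp
          also have "\<dots> = x" by (rule q(2))
          finally show False using qmin[OF r] by simp
        qed
      qed
    qed
    then have "inj_on (\<lambda>i. int ((?T ^^ i) x)) {0..<q}" by (auto simp: inj_on_def)
    then show ?thesis by (simp add: ns_def distinct_map)
  qed
  have cyc: "collatz_cycle (set ns)"
    unfolding collatz_cycle_def
  proof (intro exI conjI allI impI)
    show "ns \<noteq> []" using q len by auto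
    show "distinct ns" by (rule dist)
    show "set ns = set ns" ..
    fix i assume i: "i < length ns"
    show "collatz (ns ! i) = ns ! ((i + 1) mod length ns)"
    proof (cases "i + 1 < q")
      case True
      then show ?thesis using i len by (simp add: nth collatz_int_nat)
    next
      case False
      then have "i + 1 = q" using i len by auto
      then have "(i + 1) mod length ns = 0" using len by simp
      moreover have "collatz_nat ((?T ^^ i) x) = x"
        using q(2) \<open>i + 1 = q\<close> by (metis comp_apply funpow.simps(2) add.commute plus_1_eq_Suc)
      ultimately show ?thesis using i len q by (simp add: nth collatz_int_nat)
    qed
  qed
  have pos: "set ns \<subseteq> {0<..}"
    using funpow_pos[OF x] by (force simp: ns_def Suc_le_eq)
  have "set ns = {1, 2}" using H cyc pos by blast
  moreover have "int x \<in> set ns" using q by (simp add: ns_def image_iff) (metis atLeastLessThan_iff funpow_0 le0)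
  ultimately show ?thesis by auto
qed

lemma dichotomy:
  assumes H: "\<forall>C. collatz_cycle C \<and> C \<subseteq> {0<..} \<longrightarrow> C = {1, 2}"
    and e: "1 \<le> e"
  shows "(\<exists>k. (collatz_nat ^^ k) e < 3) \<or> filterlim (\<lambda>k. (collatz_nat ^^ k) e) at_top sequentially"
proof (rule disjCI)
  let ?f = "\<lambda>k. (collatz_nat ^^ k) e"
  assume nf: "\<not> filterlim ?f at_top sequentially"
  then obtain Z where "\<not> eventually (\<lambda>k. Z \<le> ?f k) sequentially"
    by (auto simp: filterlim_at_top)
  then have "\<forall>N. \<exists>k\<ge>N. ?f k < Z" by (auto simp: eventually_sequentially not_le)
  then have inf: "infinite {k. ?f k < Z}" by (auto simp: infinite_nat_iff_unbounded_le)
  have "finite (?f ` {k. ?f k < Z})" by (rule finite_subset[of _ "{..<Z}"]) auto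
  from pigeonhole_infinite[OF inf this] obtain k0 where k0: "?f k0 < Z" "infinite {k \<in> {k. ?f k < Z}. ?f k = ?f k0}"
    by auto
  have "\<exists>k1>k0. k1 \<in> {k \<in> {k. ?f k < Z}. ?f k = ?f k0}"
    using k0(2) infinite_nat_iff_unbounded by blast
  then obtain k1 where k1: "k1 > k0" "?f k1 = ?f k0" by auto
  have "(collatz_nat ^^ (k1 - k0)) (?f k0) = (collatz_nat ^^ ((k1 - k0) + k0)) e"
    by (simp only: funpow_add comp_apply)
  also have "(k1 - k0) + k0 = k1" using k1 by simp
  finally have "(collatz_nat ^^ (k1 - k0)) (?f k0) = ?f k0" using k1 by simp
  then have "?f k0 < 3"
    using periodic_cycle[OF H funpow_pos[OF e], of "k1 - k0" k0] k1 by auto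
  then show "\<exists>k. ?f k < 3" by blast
qed


lemma cr_lt:
  assumes "1 \<le> conv_radius c" "x < 1" shows "ereal x < conv_radius c"
  using assms by (metis less_ereal.simps(1) one_ereal_def order_less_le_trans)

lemma collatz_nat_ge: "n \<le> 2 * collatz_nat n"
  by (auto simp: collatz_nat_eq)

definition pre :: "nat \<Rightarrow> nat set" where "pre m = {n. collatz_nat n = m}"

lemma pre_sub: "pre m \<subseteq> {..2*m}"
  using collatz_nat_ge by (auto simp: pre_def)

lemma finite_pre[simp]: "finite (pre m)"
  using pre_sub finite_subset by blast

definition Top :: "(nat \<Rightarrow> complex) \<Rightarrow> nat \<Rightarrow> complex" where
  "Top c m = (\<Sum>n\<in>pre m. c n)"

lemma group_has_sum:
  fixes g :: "nat \<Rightarrow> 'a::banach"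
  assumes "(g has_sum S) UNIV"
  shows "((\<lambda>m. \<Sum>n\<in>pre m. g n) has_sum S) UNIV"
proof -
  have bij: "bij_betw (\<lambda>n. (collatz_nat n, n)) UNIV (Sigma UNIV pre)"
    by (rule bij_betwI[where g=snd]) (auto simp: pre_def)
  have "((\<lambda>p. g (snd p)) has_sum S) (Sigma UNIV pre)"
    using has_sum_reindex_bij_betw[OF bij, of "\<lambda>p. g (snd p)" S] assms by simp
  then show ?thesis
    by (rule has_sum_SigmaD) (auto intro: has_sum_finiteI)
qed

lemma pow_collatz_le:
  fixes x :: real assumes "0 \<le> x" "x \<le> 1"
  shows "x ^ collatz_nat n \<le> sqrt x ^ n"
proof -
  have "x ^ collatz_nat n = sqrt x ^ (2 * collatz_nat n)"
    using assms by (simp add: power_mult)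
  also have "\<dots> \<le> sqrt x ^ n"
    using assms collatz_nat_ge[of n] by (intro power_decreasing) auto
  finally show ?thesis .
qed

lemma collatz_op_ps:
  assumes cr: "1 \<le> conv_radius a" and z: "norm z < 1"
  shows "(\<lambda>m. Top a m * z^m) sums (\<Sum>n. a n * z ^ collatz_nat n)"
    and "summable (\<lambda>n. norm (a n * z ^ collatz_nat n))"
proof -
  have "ereal (norm (complex_of_real (sqrt (norm z)))) < conv_radius a"
    using z by (intro cr_lt[OF cr]) simp
  from abs_summable_in_conv_radius[OF this]
  have s1: "summable (\<lambda>n. norm (a n) * sqrt (norm z) ^ n)"
    by (simp add: norm_mult norm_power)
  show sm: "summable (\<lambda>n. norm (a n * z ^ collatz_nat n))"
  proof (rule summable_comparison_test[OF _ s1])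
    show "\<exists>N. \<forall>n\<ge>N. norm (norm (a n * z ^ collatz_nat n)) \<le> norm (a n) * sqrt (norm z) ^ n"
      using z by (auto simp: norm_mult norm_power intro!: mult_left_mono pow_collatz_le)
  qed
  have "((\<lambda>n. a n * z ^ collatz_nat n) has_sum (\<Sum>n. a n * z ^ collatz_nat n)) UNIV"
    by (rule norm_summable_imp_has_sum[OF sm summable_sums[OF summable_norm_cancel[OF sm]]])
  from group_has_sum[OF this]
  have "((\<lambda>m. \<Sum>n\<in>pre m. a n * z ^ collatz_nat n) has_sum (\<Sum>n. a n * z ^ collatz_nat n)) UNIV" .
  moreover have "(\<Sum>n\<in>pre m. a n * z ^ collatz_nat n) = Top a m * z^m" for m
  proof -
    have "(\<Sum>n\<in>pre m. a n * z ^ collatz_nat n) = (\<Sum>n\<in>pre m. a n * z ^ m)"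
      by (rule sum.cong) (auto simp: pre_def)
    also have "\<dots> = Top a m * z^m" unfolding Top_def by (rule sum_distrib_right[symmetric])
    finally show ?thesis .
  qed
  ultimately show "(\<lambda>m. Top a m * z^m) sums (\<Sum>n. a n * z ^ collatz_nat n)"
    by (simp add: has_sum_imp_sums)
qed

lemma Top_conv: assumes "1 \<le> conv_radius a" shows "1 \<le> conv_radius (Top a)"
proof -
  have "ereal 1 \<le> conv_radius (Top a)"
  proof (rule conv_radius_geI_ex')
    fix r :: real assume "0 < r" "ereal r < ereal 1"
    then show "summable (\<lambda>n. Top a n * complex_of_real r ^ n)"
      using collatz_op_ps(1)[OF assms, of "complex_of_real r"] by (auto intro: sums_summable)
  qed
  then show ?thesis by (simp add: one_ereal_def)
qed

lemma ps_holo: assumes "1 \<le> conv_radius c" shows "ps c holomorphic_on ball 0 1"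
proof -
  have "ps c = eval_fps (Abs_fps c)" by (simp add: fun_eq_iff ps_def eval_fps_def)
  moreover have "ball (0::complex) 1 \<subseteq> eball 0 (fps_conv_radius (Abs_fps c))"
  proof
    fix z :: complex assume "z \<in> ball 0 1"
    then show "z \<in> eball 0 (fps_conv_radius (Abs_fps c))"
      using cr_lt[OF assms, of "norm z"] by (simp add: fps_conv_radius_def)
  qed
  ultimately show ?thesis by (simp add: holomorphic_on_eval_fps)
qed

lemma taylor_of_ps:
  assumes "1 \<le> conv_radius c" "\<And>z. z \<in> ball 0 1 \<Longrightarrow> h z = ps c z"
  shows "taylor_coeff h = c"
proof
  fix n
  have "h has_fps_expansion Abs_fps c"
    unfolding has_fps_expansion_def
  proof
    show "0 < fps_conv_radius (Abs_fps c)"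
      using cr_lt[OF assms(1), of 0] by (simp add: fps_conv_radius_def zero_ereal_def)
    have "eventually (\<lambda>z. z \<in> ball (0::complex) 1) (nhds 0)"
      by (intro eventually_nhds_in_open) auto
    then show "\<forall>\<^sub>F z in nhds 0. eval_fps (Abs_fps c) z = h z"
      by eventually_elim (simp add: assms(2) ps_def eval_fps_def)
  qed
  from fps_nth_fps_expansion[OF this, of n] show "taylor_coeff h n = c n"
    by (simp add: taylor_coeff_def)
qed

lemma collatz_op_step:
  assumes "f holomorphic_on ball 0 1"
  shows "collatz_op f holomorphic_on ball 0 1"
    and "taylor_coeff (collatz_op f) = Top (taylor_coeff f)"
    and "\<And>z. z \<in> ball 0 1 \<Longrightarrow> collatz_op f z = ps (Top (taylor_coeff f)) z"
proof -
  have cr: "1 \<le> conv_radius (taylor_coeff f)" by (rule taylor_conv[OF assms])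
  show eq: "collatz_op f z = ps (Top (taylor_coeff f)) z" if "z \<in> ball 0 1" for z
    using collatz_op_ps(1)[OF cr, of z] that by (simp add: collatz_op_def ps_def sums_iff)
  show "collatz_op f holomorphic_on ball 0 1"
    using ps_holo[OF Top_conv[OF cr]] by (rule holomorphic_transform) (simp add: eq)
  show "taylor_coeff (collatz_op f) = Top (taylor_coeff f)"
    by (rule taylor_of_ps[OF Top_conv[OF cr]]) (simp add: eq)
qed


definition preN :: "nat \<Rightarrow> nat \<Rightarrow> nat set" where
  "preN k m = {n. (collatz_nat ^^ k) n = m}"

lemma funpow_ge: "n \<le> 2^k * (collatz_nat ^^ k) n"
proof (induction k arbitrary: n)
  case (Suc k)
  have "n \<le> 2 * collatz_nat n" by (rule collatz_nat_ge)
  also have "collatz_nat n \<le> 2^k * (collatz_nat ^^ k) (collatz_nat n)" by (rule Suc.IH)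
  finally show ?case by (simp add: funpow_Suc_right del: funpow.simps)
qed simp

lemma finite_preN[simp]: "finite (preN k m)"
proof (rule finite_subset[of _ "{..2^k * m}"])
  show "preN k m \<subseteq> {..2^k * m}" using funpow_ge by (auto simp: preN_def)
qed simp

lemma TopN: "(Top ^^ k) c m = (\<Sum>n\<in>preN k m. c n)"
proof (induction k arbitrary: c m)
  case 0
  have "preN 0 m = {m}" by (auto simp: preN_def)
  then show ?case by simp
next
  case (Suc k)
  have "(Top ^^ Suc k) c m = (Top ^^ k) (Top c) m" by (simp add: funpow_Suc_right del: funpow.simps)
  also have "\<dots> = (\<Sum>j\<in>preN k m. \<Sum>n\<in>pre j. c n)" by (simp add: Suc.IH Top_def)
  also have "\<dots> = (\<Sum>n\<in>(\<Union>j\<in>preN k m. pre j). c n)"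
    by (rule sum.UNION_disjoint[symmetric]) (auto simp: pre_def[symmetric], auto simp: pre_def)
  also have "(\<Union>j\<in>preN k m. pre j) = preN (Suc k) m"
    by (auto simp: preN_def pre_def funpow_Suc_right simp del: funpow.simps)
  finally show ?case .
qed

lemma TopN_add: "(Top ^^ k) (\<lambda>n. x n + y n) m = (Top ^^ k) x m + (Top ^^ k) y m"
  by (simp add: TopN sum.distrib)

lemma TopN_diff: "(Top ^^ k) (\<lambda>n. x n - y n) m = (Top ^^ k) x m - (Top ^^ k) y m"
  by (simp add: TopN sum_subtractf)

lemma TopN_sum: "(Top ^^ k) (\<lambda>n. \<Sum>j\<in>J. x j n) m = (\<Sum>j\<in>J. (Top ^^ k) (x j) m)"
  by (simp add: TopN sum.swap[of _ J])

lemma TopN_comp: "(Top ^^ k) ((Top ^^ l) c) = (Top ^^ (k + l)) c"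
  by (simp add: funpow_add)

lemma halving: "2^k dvd n \<Longrightarrow> (collatz_nat ^^ k) n = n div 2^k"
proof (induction k arbitrary: n)
  case (Suc k)
  then have ev: "even n" by (simp add: dvd_mult_left)
  then have cn: "collatz_nat n = n div 2" by (simp add: collatz_nat_eq)
  have "2^k dvd n div 2" using Suc.prems ev by (auto simp: dvd_def)
  then have "(collatz_nat ^^ k) (n div 2) = n div 2 div 2^k" by (rule Suc.IH)
  then show ?case by (simp add: funpow_Suc_right cn div_mult2_eq del: funpow.simps)
qed simp

definition Sh :: "nat \<Rightarrow> (nat \<Rightarrow> complex) \<Rightarrow> nat \<Rightarrow> complex" where
  "Sh a y e = (if 2^a dvd e then y (e div 2^a) else 0)"

lemma TopN_Sh:
  assumes "k \<le> a"
  shows "(Top ^^ k) (Sh a y) m = Sh (a - k) y m"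
proof -
  have ka: "2^a = 2^k * (2::nat)^(a-k)" using assms by (simp flip: power_add)
  have mem: "2^k * m \<in> preN k m" by (simp add: preN_def halving)
  have zero: "Sh a y n = 0" if "n \<in> preN k m - {2^k * m}" for n
  proof (rule ccontr)
    assume "Sh a y n \<noteq> 0"
    then have "2^a dvd n" by (auto simp: Sh_def split: if_splits)
    then have "2^k dvd n" using ka by (metis dvd_mult_left)
    then have "(collatz_nat ^^ k) n = n div 2^k" by (rule halving)
    moreover have "(collatz_nat ^^ k) n = m" using that by (simp add: preN_def)
    ultimately have "n = 2^k * m" using \<open>2^k dvd n\<close> by auto
    then show False using that by simp
  qed
  have "(Top ^^ k) (Sh a y) m = Sh a y (2^k * m)"
    by (simp add: TopN sum.remove[OF finite_preN mem] zero sum.neutral)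
  also have "\<dots> = Sh (a - k) y m"
    by (simp add: Sh_def ka div_mult2_eq)
  finally show ?thesis .
qed

lemma norm_sum_sq_card:
  fixes x :: "'i \<Rightarrow> complex"
  shows "norm (\<Sum>i\<in>I. x i)^2 \<le> real (card I) * (\<Sum>i\<in>I. norm (x i)^2)"
proof -
  have "norm (\<Sum>i\<in>I. x i)^2 \<le> (\<Sum>i\<in>I. norm (x i))^2"
    by (intro power_mono norm_sum) auto
  also have "\<dots> \<le> (\<Sum>i\<in>I. norm (x i)^2) * real (card I)"
    by (rule sum_squared_le_sum_of_squares)
  finally show ?thesis by (simp add: mult.commute)
qed

lemma norm_sum_sq_weighted:
  fixes x :: "'i \<Rightarrow> complex"
  assumes "\<And>i. i \<in> I \<Longrightarrow> 0 < \<beta> i"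
  shows "norm (\<Sum>i\<in>I. x i)^2 \<le> (\<Sum>i\<in>I. 1 / \<beta> i) * (\<Sum>i\<in>I. \<beta> i * norm (x i)^2)"
proof -
  have "norm (\<Sum>i\<in>I. x i)^2 \<le> (\<Sum>i\<in>I. norm (x i))^2"
    by (intro power_mono norm_sum) auto
  also have "(\<Sum>i\<in>I. norm (x i)) = (\<Sum>i\<in>I. (1 / sqrt (\<beta> i)) * (sqrt (\<beta> i) * norm (x i)))"
    using assms by (intro sum.cong) (auto simp: field_simps dest!: assms)
  also have "(\<dots>)^2 \<le> (\<Sum>i\<in>I. (1 / sqrt (\<beta> i))^2) * (\<Sum>i\<in>I. (sqrt (\<beta> i) * norm (x i))^2)"
    by (rule Cauchy_Schwarz_ineq_sum)
  also have "\<dots> = (\<Sum>i\<in>I. 1 / \<beta> i) * (\<Sum>i\<in>I. \<beta> i * norm (x i)^2)"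
    using assms by (intro arg_cong2[where f="(*)"] sum.cong) (auto simp: power_divide power_mult_distrib less_imp_le)
  finally show ?thesis .
qed


lemma finite_preN'[simp]: "finite {n. (collatz_nat ^^ k) n = m}"
  using finite_preN[of k m] by (simp add: preN_def)

definition cutq :: "(nat \<Rightarrow> complex) \<Rightarrow> nat \<Rightarrow> complex" where
  "cutq d m = (if m < 3 then 0 else d m)"

definition qs :: "nat \<Rightarrow> (nat \<Rightarrow> complex) \<Rightarrow> real" where
  "qs M d = (\<Sum>m<M. norm (cutq d m)^2 * wt m)"

definition ps2 :: "nat \<Rightarrow> (nat \<Rightarrow> complex) \<Rightarrow> real" where
  "ps2 M d = (\<Sum>m<M. norm (d m)^2 * wt m)"

lemma qs_le_ps2: "qs M d \<le> ps2 M d"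
  unfolding qs_def ps2_def by (intro sum_mono mult_right_mono) (auto simp: cutq_def wt_nonneg)

lemma qs_nonneg: "0 \<le> qs M d" unfolding qs_def by (intro sum_nonneg) (auto simp: wt_nonneg)

lemma Sh_bound:
  assumes supp: "\<And>m. y m \<noteq> 0 \<Longrightarrow> 3 \<le> m \<and> m < D"
  shows "ps2 M (Sh a y) \<le> (\<Sum>m<D. norm (y m)^2) * wt (3 * 2^a)"
proof -
  let ?S = "{m'. 2^a * m' < M}"
  have finS: "finite ?S" by (rule finite_subset[of _ "{..<M}"]) (auto, metis le_less_trans mult_le_mono1 mult_1 one_le_numeral one_le_power)
  have "ps2 M (Sh a y) = (\<Sum>m\<in>{m\<in>{..<M}. 2^a dvd m}. norm (y (m div 2^a))^2 * wt m)"
    unfolding ps2_def Sh_def by (rule sum.mono_neutral_cong_right) auto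
  also have "{m\<in>{..<M}. 2^a dvd m} = (\<lambda>m'. 2^a * m') ` ?S" by (auto simp: dvd_def)
  also have "(\<Sum>m\<in>(\<lambda>m'. 2^a * m') ` ?S. norm (y (m div 2^a))^2 * wt m) = (\<Sum>m'\<in>?S. norm (y m')^2 * wt (2^a * m'))"
    by (subst sum.reindex) (auto simp: inj_on_def)
  also have "\<dots> \<le> (\<Sum>m'\<in>?S. norm (y m')^2 * wt (3 * 2^a))"
  proof (rule sum_mono)
    fix m' assume "m' \<in> ?S"
    show "norm (y m')^2 * wt (2^a * m') \<le> norm (y m')^2 * wt (3 * 2^a)"
    proof (cases "y m' = 0")
      case False
      then have "3 \<le> m'" using supp by blast
      then have "wt (2^a * m') \<le> wt (3 * 2^a)" by (intro wt_antimono) (simp add: mult.commute)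
      then show ?thesis by (intro mult_left_mono) auto
    qed simp
  qed
  also have "\<dots> = (\<Sum>m'\<in>?S \<inter> {..<D}. norm (y m')^2 * wt (3 * 2^a))"
    using finS by (intro sum.mono_neutral_right) (auto dest: supp)
  also have "\<dots> \<le> (\<Sum>m'\<in>{..<D}. norm (y m')^2 * wt (3 * 2^a))"
    by (intro sum_mono2) (auto simp: wt_nonneg)
  finally show ?thesis by (simp add: sum_distrib_right)
qed

definition Rf :: "nat \<Rightarrow> (nat \<Rightarrow> complex) \<Rightarrow> nat \<Rightarrow> real" where
  "Rf D y k = real D * (\<Sum>e<D. norm (y e)^2 * (if 3 \<le> (collatz_nat ^^ k) e then wt ((collatz_nat ^^ k) e) else 0))"

lemma CSfin:
  assumes supp: "\<And>e. y e \<noteq> 0 \<Longrightarrow> e < D"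
  shows "qs M ((Top ^^ k) y) \<le> Rf D y k"
proof -
  let ?g = "collatz_nat ^^ k"
  define h where "h e = norm (y e)^2 * (if 3 \<le> ?g e then wt (?g e) else 0)" for e
  have h0: "0 \<le> h e" for e by (simp add: h_def wt_nonneg)
  have pt: "norm (cutq ((Top ^^ k) y) m)^2 * wt m \<le> real D * (\<Sum>e\<in>{e\<in>{..<D}. ?g e = m}. h e)" for m
  proof (cases "m < 3")
    case True then show ?thesis using h0 by (simp add: cutq_def sum_nonneg)
  next
    case False
    have "(Top ^^ k) y m = (\<Sum>e\<in>{e\<in>{..<D}. ?g e = m}. y e)"
      unfolding TopN by (rule sum.mono_neutral_cong_right) (auto simp: preN_def dest: supp)
    then have "norm ((Top ^^ k) y m)^2 \<le> real (card {e\<in>{..<D}. ?g e = m}) * (\<Sum>e\<in>{e\<in>{..<D}. ?g e = m}. norm (y e)^2)"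
      using norm_sum_sq_card by metis
    also have "\<dots> \<le> real D * (\<Sum>e\<in>{e\<in>{..<D}. ?g e = m}. norm (y e)^2)"
    proof (intro mult_right_mono sum_nonneg)
      have "card {e\<in>{..<D}. ?g e = m} \<le> card {..<D}" by (intro card_mono) auto
      then show "real (card {e\<in>{..<D}. ?g e = m}) \<le> real D" by simp
    qed auto
    finally have "norm ((Top ^^ k) y m)^2 * wt m \<le> real D * (\<Sum>e\<in>{e\<in>{..<D}. ?g e = m}. norm (y e)^2) * wt m"
      by (intro mult_right_mono) (auto simp: wt_nonneg)
    also have "\<dots> = real D * (\<Sum>e\<in>{e\<in>{..<D}. ?g e = m}. h e)"
      using False by (simp add: h_def sum_distrib_right mult.assoc)
    finally show ?thesis using False by (simp add: cutq_def)
  qed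
  have "qs M ((Top ^^ k) y) \<le> (\<Sum>m<M. real D * (\<Sum>e\<in>{e\<in>{..<D}. ?g e = m}. h e))"
    unfolding qs_def by (intro sum_mono pt)
  also have "\<dots> \<le> (\<Sum>m\<in>{..<M} \<union> ?g ` {..<D}. real D * (\<Sum>e\<in>{e\<in>{..<D}. ?g e = m}. h e))"
    by (intro sum_mono2) (auto intro!: mult_nonneg_nonneg sum_nonneg h0)
  also have "\<dots> = real D * (\<Sum>m\<in>{..<M} \<union> ?g ` {..<D}. (\<Sum>e\<in>{e. e \<in> {..<D} \<and> ?g e = m}. h e))"
    by (simp add: sum_distrib_left)
  also have "(\<Sum>m\<in>{..<M} \<union> ?g ` {..<D}. (\<Sum>e\<in>{e. e \<in> {..<D} \<and> ?g e = m}. h e)) = (\<Sum>e<D. h e)"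
    by (rule sum.group) auto
  finally show ?thesis by (simp add: Rf_def h_def)
qed


lemma L2_conv:
  fixes c :: "nat \<Rightarrow> complex"
  assumes sm: "summable (\<lambda>n. norm (c n)^2 * wt n)"
  shows "1 \<le> conv_radius c"
proof -
  have "ereal 1 \<le> conv_radius c"
  proof (rule conv_radius_geI_ex')
    fix r :: real assume r: "0 < r" "ereal r < ereal 1"
    then have r1: "r < 1" by simp
    define \<rho> where "\<rho> = sqrt r"
    have \<rho>: "0 < \<rho>" "\<rho> < 1" "r < \<rho>" using r r1 by (auto simp: \<rho>_def real_less_rsqrt power2_eq_square)
    obtain A where A: "A > 0" "\<And>n. A * \<rho>^(2*n) \<le> wt n" using wt_lower[OF \<rho>(1,2)] by blast
    define S where "S = (\<Sum>n. norm (c n)^2 * wt n)"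
    have bnd: "norm (c n) * \<rho>^n \<le> sqrt (S / A)" for n
    proof -
      have "(\<Sum>i\<in>{n}. norm (c i)^2 * wt i) \<le> S" unfolding S_def
        using sm by (intro sum_le_suminf) (auto simp: wt_nonneg)
      then have "norm (c n)^2 * wt n \<le> S" by simp
      moreover have "norm (c n)^2 * (A * \<rho>^(2*n)) \<le> norm (c n)^2 * wt n"
        using A by (intro mult_left_mono) auto
      ultimately have "(norm (c n) * \<rho>^n)^2 * A \<le> S"
        by (simp add: power_mult_distrib power_mult mult_ac)
      then have "(norm (c n) * \<rho>^n)^2 \<le> S / A" using A by (simp add: field_simps)
      then show ?thesis by (simp add: real_le_rsqrt)
    qed
    have "summable (\<lambda>n. norm (c n * complex_of_real r ^ n))"
    proof (rule summable_comparison_test[OF _ summable_mult[OF summable_geometric[of "r / \<rho>"], of "sqrt (S/A)"]])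
      show "\<exists>N. \<forall>n\<ge>N. norm (norm (c n * complex_of_real r ^ n)) \<le> sqrt (S / A) * (r / \<rho>) ^ n"
      proof (intro exI allI impI)
        fix n :: nat
        have "norm (c n * complex_of_real r ^ n) = (norm (c n) * \<rho>^n) * (r / \<rho>)^n"
          using \<rho> r by (simp add: norm_mult norm_power power_divide)
        also have "\<dots> \<le> sqrt (S / A) * (r / \<rho>)^n"
          using bnd[of n] \<rho> r by (intro mult_right_mono) auto
        finally show "norm (norm (c n * complex_of_real r ^ n)) \<le> sqrt (S / A) * (r / \<rho>) ^ n" by simp
      qed
      show "norm (r / \<rho>) < 1" using \<rho> r by auto
    qed
    then show "summable (\<lambda>n. c n * complex_of_real r ^ n)" by (rule summable_norm_cancel)
  qed
  then show ?thesis by (simp add: one_ereal_def)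
qed

lemma term_lim:
  assumes H: "\<forall>C. collatz_cycle C \<and> C \<subseteq> {0<..} \<longrightarrow> C = {1, 2}" and e: "1 \<le> e"
  shows "(\<lambda>k. if 3 \<le> (collatz_nat ^^ k) e then wt ((collatz_nat ^^ k) e) else 0) \<longlonglongrightarrow> 0"
proof -
  let ?f = "\<lambda>k. (collatz_nat ^^ k) e"
  from dichotomy[OF H e] show ?thesis
  proof
    assume "\<exists>k. ?f k < 3"
    then obtain k0 where "?f k0 < 3" by blast
    then have "\<forall>k\<ge>k0. ?f k < 3" using small_stays by blast
    then have "eventually (\<lambda>k. (if 3 \<le> ?f k then wt (?f k) else 0) = 0) sequentially"
    proof (intro eventually_sequentiallyI[of k0])
      fix k assume "\<forall>k\<ge>k0. ?f k < 3" "k0 \<le> k"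
      then have "?f k < 3" by blast
      then show "(if 3 \<le> ?f k then wt (?f k) else 0) = 0" by simp
    qed
    then show ?thesis by (rule tendsto_eventually)
  next
    assume lim: "filterlim ?f at_top sequentially"
    have w0: "(\<lambda>k. wt (?f k)) \<longlonglongrightarrow> 0" by (rule filterlim_compose[OF wt_lim lim])
    show ?thesis
    proof (rule tendsto_sandwich[OF _ _ tendsto_const w0])
      show "eventually (\<lambda>k. 0 \<le> (if 3 \<le> ?f k then wt (?f k) else 0)) sequentially"
        by (auto simp: wt_nonneg)
      show "eventually (\<lambda>k. (if 3 \<le> ?f k then wt (?f k) else 0) \<le> wt (?f k)) sequentially"
        by (auto simp: wt_nonneg)
    qed
  qed
qed

lemma Rf_lim:
  assumes H: "\<forall>C. collatz_cycle C \<and> C \<subseteq> {0<..} \<longrightarrow> C = {1, 2}"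
    and supp: "\<And>e. y e \<noteq> 0 \<Longrightarrow> 1 \<le> e"
  shows "Rf D y \<longlonglongrightarrow> 0"
proof -
  have "(\<lambda>k. \<Sum>e<D. norm (y e)^2 * (if 3 \<le> (collatz_nat ^^ k) e then wt ((collatz_nat ^^ k) e) else 0)) \<longlonglongrightarrow> (\<Sum>e<D. 0)"
  proof (rule tendsto_sum)
    fix e
    show "(\<lambda>k. norm (y e)^2 * (if 3 \<le> (collatz_nat ^^ k) e then wt ((collatz_nat ^^ k) e) else 0)) \<longlonglongrightarrow> 0"
    proof (cases "y e = 0")
      case False
      then show ?thesis using tendsto_mult_right_zero[OF term_lim[OF H supp[OF False]]] by simp
    qed simp
  qed
  then have "(\<lambda>k. real D * (\<Sum>e<D. norm (y e)^2 * (if 3 \<le> (collatz_nat ^^ k) e then wt ((collatz_nat ^^ k) e) else 0))) \<longlonglongrightarrow> real D * 0"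
    by (intro tendsto_mult tendsto_const) simp
  then show ?thesis by (simp add: Rf_def[abs_def])
qed

definition ylist :: "(rat \<times> rat) list \<Rightarrow> nat \<Rightarrow> complex" where
  "ylist L m = (if 3 \<le> m \<and> m - 3 < length L then Complex (of_rat (fst (L ! (m - 3)))) (of_rat (snd (L ! (m - 3)))) else 0)"

lemma ylist_supp: "ylist L m \<noteq> 0 \<Longrightarrow> 3 \<le> m \<and> m < 3 + length L"
  by (auto simp: ylist_def split: if_splits)

lemma rat_approx: assumes "0 < \<epsilon>" shows "\<exists>q::rat \<times> rat. norm (z - Complex (of_rat (fst q)) (of_rat (snd q))) < \<epsilon>"
proof -
  obtain a where a: "a \<in> \<rat>" "Re z - \<epsilon>/2 < a" "a < Re z" using Rats_dense_in_real[of "Re z - \<epsilon>/2" "Re z"] assms by auto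
  obtain b where b: "b \<in> \<rat>" "Im z - \<epsilon>/2 < b" "b < Im z" using Rats_dense_in_real[of "Im z - \<epsilon>/2" "Im z"] assms by auto
  obtain a' where a': "a = of_rat a'" using a(1) Rats_cases by blast
  obtain b' where b': "b = of_rat b'" using b(1) Rats_cases by blast
  have "norm (z - Complex a b) \<le> \<bar>Re (z - Complex a b)\<bar> + \<bar>Im (z - Complex a b)\<bar>" by (rule cmod_le)
  also have "\<dots> < \<epsilon>" using a b by simp
  finally show ?thesis using a' b' by (intro exI[of _ "(a', b')"]) simp
qed

lemma density:
  assumes sm: "summable (\<lambda>n. norm (c n)^2 * wt n)" and \<delta>: "0 < \<delta>"
  shows "\<exists>L. \<forall>M. qs M (\<lambda>m. ylist L m - c m) \<le> \<delta>"
proof -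
  obtain K0 where K0: "\<forall>n\<ge>K0. norm (\<Sum>i. norm (c (i + n))^2 * wt (i + n)) < \<delta>/2"
    using suminf_exist_split[OF _ sm, of "\<delta>/2"] \<delta> by auto
  define K where "K = K0 + 3"
  have "K0 \<le> K" by (simp add: K_def)
  with K0 have "norm (\<Sum>i. norm (c (i + K))^2 * wt (i + K)) < \<delta>/2" by blast
  then have tail: "(\<Sum>i. norm (c (i + K))^2 * wt (i + K)) < \<delta>/2"
    by (metis abs_ge_self order_le_less_trans real_norm_def)
  have smK: "summable (\<lambda>i. norm (c (i + K))^2 * wt (i + K))" using sm by (rule summable_ignore_initial_segment)
  define \<epsilon> where "\<epsilon> = sqrt (\<delta> / (2 * real K * (wt 0 + 1)))"
  have \<epsilon>: "0 < \<epsilon>" using \<delta> wt_nonneg[of 0] by (auto simp: \<epsilon>_def K_def)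
  have "\<forall>m. \<exists>q. norm (c m - Complex (of_rat (fst q)) (of_rat (snd q))) < \<epsilon>" using rat_approx[OF \<epsilon>] by blast
  then obtain qf where qf: "\<And>m. norm (c m - Complex (of_rat (fst (qf m))) (of_rat (snd (qf m)))) < \<epsilon>" by metis
  define L where "L = map (\<lambda>i. qf (i + 3)) [0..<K - 3]"
  have yL: "3 \<le> m \<Longrightarrow> m < K \<Longrightarrow> ylist L m = Complex (of_rat (fst (qf m))) (of_rat (snd (qf m)))" for m
    by (auto simp: ylist_def L_def K_def)
  have yL0: "K \<le> m \<Longrightarrow> ylist L m = 0" for m by (auto simp: ylist_def L_def K_def)
  have pt1: "norm (cutq (\<lambda>m. ylist L m - c m) m)^2 * wt m \<le> \<delta> / (2 * real K)" if "m < K" for m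
  proof (cases "m < 3")
    case True then show ?thesis using \<delta> by (simp add: cutq_def)
  next
    case False
    have "norm (cutq (\<lambda>m. ylist L m - c m) m) \<le> \<epsilon>"
      using qf[of m] False that by (simp add: cutq_def yL norm_minus_commute)
    then have "norm (cutq (\<lambda>m. ylist L m - c m) m)^2 \<le> \<epsilon>^2" by (intro power_mono) auto
    also have "\<epsilon>^2 = \<delta> / (2 * real K * (wt 0 + 1))" using \<delta> wt_nonneg[of 0] by (simp add: \<epsilon>_def K_def)
    finally have a: "norm (cutq (\<lambda>m. ylist L m - c m) m)^2 \<le> \<delta> / (2 * real K * (wt 0 + 1))" .
    have "wt m \<le> wt 0 + 1" using wt_antimono[of 0 m] by simp
    then have "norm (cutq (\<lambda>m. ylist L m - c m) m)^2 * wt m \<le> \<delta> / (2 * real K * (wt 0 + 1)) * (wt 0 + 1)"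
    proof (rule mult_mono[OF a])
      show "0 \<le> \<delta> / (2 * real K * (wt 0 + 1))" using \<delta> wt_nonneg[of 0] by (simp add: K_def)
    qed (auto simp: wt_nonneg)
    also have "\<dots> = \<delta> / (2 * real K)"
    proof -
      have "0 < wt 0 + 1" using wt_nonneg[of 0] by simp
      moreover have "0 < real K" by (simp add: K_def)
      moreover have "\<And>W. 0 < W \<Longrightarrow> 0 < real K \<Longrightarrow> \<delta> / (2 * real K * W) * W = \<delta> / (2 * real K)"
        by (simp add: field_simps)
      ultimately show ?thesis by blast
    qed
    finally show ?thesis .
  qed
  show ?thesis
  proof (intro exI allI)
    fix M
    have "qs M (\<lambda>m. ylist L m - c m) \<le> qs (max M K) (\<lambda>m. ylist L m - c m)"
      unfolding qs_def by (intro sum_mono2) (auto simp: wt_nonneg)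
    also have "\<dots> = (\<Sum>m<K. norm (cutq (\<lambda>m. ylist L m - c m) m)^2 * wt m) + (\<Sum>m\<in>{K..<max M K}. norm (cutq (\<lambda>m. ylist L m - c m) m)^2 * wt m)"
    proof -
      have "{..<max M K} = {..<K} \<union> {K..<max M K}" by auto
      moreover have "(\<Sum>m\<in>{..<K} \<union> {K..<max M K}. norm (cutq (\<lambda>m. ylist L m - c m) m)^2 * wt m) =
         (\<Sum>m<K. norm (cutq (\<lambda>m. ylist L m - c m) m)^2 * wt m) + (\<Sum>m\<in>{K..<max M K}. norm (cutq (\<lambda>m. ylist L m - c m) m)^2 * wt m)"
        by (rule sum.union_disjoint) auto
      ultimately show ?thesis unfolding qs_def by simp
    qed
    also have "(\<Sum>m<K. norm (cutq (\<lambda>m. ylist L m - c m) m)^2 * wt m) \<le> (\<Sum>m<K. \<delta> / (2 * real K))"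
      by (intro sum_mono pt1) auto
    also have "\<dots> = \<delta>/2"
    proof -
      have Kp: "0 < real K" by (simp add: K_def)
      have "(\<Sum>m<K. \<delta> / (2 * real K)) = real K * (\<delta> / (2 * real K))" by simp
      also have "\<dots> = \<delta>/2" using Kp by (simp add: field_simps)
      finally show ?thesis .
    qed
    also have "(\<Sum>m\<in>{K..<max M K}. norm (cutq (\<lambda>m. ylist L m - c m) m)^2 * wt m) = (\<Sum>i<max M K - K. norm (c (i + K))^2 * wt (i + K))"
    proof -
      have "(\<Sum>m\<in>{K..<max M K}. norm (cutq (\<lambda>m. ylist L m - c m) m)^2 * wt m) = (\<Sum>m\<in>{K..<max M K}. norm (c m)^2 * wt m)"
        by (intro sum.cong) (auto simp: cutq_def yL0 K_def)
      also have "\<dots> = (\<Sum>i<max M K - K. norm (c (i + K))^2 * wt (i + K))"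
      proof -
        have "(\<Sum>m\<in>{0+K..<(max M K - K)+K}. norm (c m)^2 * wt m) = (\<Sum>i\<in>{0..<max M K - K}. norm (c (i + K))^2 * wt (i + K))"
          by (rule sum.shift_bounds_nat_ivl)
        then show ?thesis by (simp add: atLeast0LessThan)
      qed
      finally show ?thesis .
    qed
    also have "\<dots> \<le> (\<Sum>i. norm (c (i + K))^2 * wt (i + K))"
      by (intro sum_le_suminf smK) (auto simp: wt_nonneg)
    finally show "qs M (\<lambda>m. ylist L m - c m) \<le> \<delta>" using tail by simp
  qed
qed


definition Ylst :: "nat \<Rightarrow> (rat \<times> rat) list" where "Ylst j = from_nat (fst (prod_decode j))"
definition Y :: "nat \<Rightarrow> nat \<Rightarrow> complex" where "Y j = ylist (Ylst j)"
definition DD :: "nat \<Rightarrow> nat" where "DD j = 3 + length (Ylst j)"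
definition CY :: "nat \<Rightarrow> real" where "CY j = (\<Sum>m<DD j. norm (Y j m)^2)"
definition eta :: "nat \<Rightarrow> real" where "eta j = 1 / (real j + 1)^3"
definition K0 :: "nat \<Rightarrow> real \<Rightarrow> nat" where "K0 i \<eta> = (LEAST K. \<forall>k\<ge>K. Rf (DD i) (Y i) k \<le> \<eta>)"
definition G2 :: "nat \<Rightarrow> nat" where "G2 j = (LEAST g. \<forall>a\<ge>g. 2^j * CY j * wt (3 * 2^a) \<le> (1/4)^j)"
definition gap :: "nat \<Rightarrow> nat" where "gap j = 1 + G2 j + (\<Sum>i<j. K0 i (eta j))"
definition nn :: "nat \<Rightarrow> nat" where "nn j = (\<Sum>i\<le>j. gap i)"
definition Z :: "nat \<Rightarrow> nat \<Rightarrow> complex" where "Z j = Sh (nn j) (Y j)"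
definition FF :: "nat \<Rightarrow> complex" where "FF e = (\<Sum>j\<le>e. Z j e)"

lemma Y_supp: "Y j m \<noteq> 0 \<Longrightarrow> 3 \<le> m \<and> m < DD j"
  using ylist_supp by (auto simp: Y_def DD_def)

lemma CY_nonneg: "0 \<le> CY j" by (simp add: CY_def sum_nonneg)

lemma nn_Suc: "nn (Suc j) = nn j + gap (Suc j)" by (simp add: nn_def)

lemma nn_ge_gap: "gap j \<le> nn j"
  unfolding nn_def by (rule member_le_sum) auto

lemma nn_diff: "i < j \<Longrightarrow> nn i + gap j \<le> nn j"
proof (induction j)
  case (Suc j)
  show ?case
  proof (cases "i = j")
    case True then show ?thesis by (simp add: nn_Suc)
  next
    case False
    then have "nn i + gap j \<le> nn j" using Suc by simp
    then show ?thesis by (simp add: nn_Suc)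
  qed
qed simp

lemma nn_mono: "i \<le> j \<Longrightarrow> nn i \<le> nn j"
  using nn_diff[of i j] by (cases "i = j") auto

lemma gap_pos: "1 \<le> gap j" by (simp add: gap_def)

lemma nn_ge: "j < nn j"
proof (induction j)
  case 0 then show ?case using gap_pos[of 0] by (simp add: nn_def)
next
  case (Suc j) then show ?case using gap_pos[of "Suc j"] by (simp add: nn_Suc)
qed

lemma Z_supp: assumes "Z j e \<noteq> 0" shows "j < e"
proof -
  from assms have dv: "2^nn j dvd e" and y: "Y j (e div 2^nn j) \<noteq> 0" by (auto simp: Z_def Sh_def split: if_splits)
  from Y_supp[OF y] have "3 \<le> e div 2^nn j" by simp
  then have "3 * 2^nn j \<le> e" using dv by (metis dvd_div_mult_self mult_le_mono1)
  moreover have "nn j < 2^nn j" by (rule less_exp)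
  ultimately show ?thesis using nn_ge[of j] by linarith
qed

lemma FF_eq: assumes "finite S" "{..e} \<subseteq> S" shows "FF e = (\<Sum>j\<in>S. Z j e)"
  unfolding FF_def
  by (rule sum.mono_neutral_left) (use assms Z_supp in \<open>auto simp: not_le dest: Z_supp\<close>)

lemma K0_spec:
  assumes H: "\<forall>C. collatz_cycle C \<and> C \<subseteq> {0<..} \<longrightarrow> C = {1, 2}" and "0 < \<eta>"
  shows "\<forall>k\<ge>K0 i \<eta>. Rf (DD i) (Y i) k \<le> \<eta>"
proof -
  have "Rf (DD i) (Y i) \<longlonglongrightarrow> 0"
    by (rule Rf_lim[OF H]) (use Y_supp in force)
  then have "eventually (\<lambda>k. Rf (DD i) (Y i) k < \<eta>) sequentially"
    using assms(2) by (rule order_tendstoD)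
  then obtain K where "\<forall>k\<ge>K. Rf (DD i) (Y i) k \<le> \<eta>"
    by (auto simp: eventually_sequentially intro: less_imp_le)
  then show ?thesis unfolding K0_def by (rule LeastI)
qed

lemma wt_pow_lim: "(\<lambda>a. wt (3 * 2^a)) \<longlonglongrightarrow> 0"
proof (rule tendsto_sandwich[OF _ _ tendsto_const wt_lim])
  show "eventually (\<lambda>a. 0 \<le> wt (3 * 2^a)) sequentially" by (simp add: wt_nonneg)
  have "a \<le> 3 * 2^a" for a :: nat
    using less_exp[of a] by linarith
  then show "eventually (\<lambda>a. wt (3 * 2^a) \<le> wt a) sequentially"
    by (intro always_eventually allI wt_antimono)
qed

lemma G2_spec: "\<forall>a\<ge>G2 j. 2^j * CY j * wt (3 * 2^a) \<le> (1/4)^j"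
proof -
  have "(\<lambda>a. 2^j * CY j * wt (3 * 2^a)) \<longlonglongrightarrow> 2^j * CY j * 0"
    by (intro tendsto_mult tendsto_const wt_pow_lim)
  then have "eventually (\<lambda>a. 2^j * CY j * wt (3 * 2^a) < (1/4)^j) sequentially"
    by (intro order_tendstoD) auto
  then obtain g where "\<forall>a\<ge>g. 2^j * CY j * wt (3 * 2^a) \<le> (1/4)^j"
    by (auto simp: eventually_sequentially intro: less_imp_le)
  then show ?thesis unfolding G2_def by (rule LeastI)
qed

lemma G2_use: "G2 j \<le> a \<Longrightarrow> 2^j * CY j * wt (3 * 2^a) \<le> (1/4)^j"
  using G2_spec by blast

lemma TopN_Sh_ge: "a \<le> k \<Longrightarrow> (Top ^^ k) (Sh a y) = (Top ^^ (k - a)) y"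
proof -
  assume "a \<le> k"
  then have "(Top ^^ k) (Sh a y) = (Top ^^ (k - a)) ((Top ^^ a) (Sh a y))"
    by (simp add: TopN_comp)
  also have "(Top ^^ a) (Sh a y) = y"
    by (rule ext) (simp add: TopN_Sh Sh_def)
  finally show ?thesis .
qed

lemma geo_half: "(\<Sum>j\<in>S. (1/2::real)^j) \<le> 2" if "finite S"
proof -
  have "(\<Sum>j\<in>S. (1/2::real)^j) \<le> (\<Sum>j<Suc (Max (insert 0 S)). (1/2)^j)"
    using that by (intro sum_mono2) (auto simp: le_imp_less_Suc)
  also have "\<dots> \<le> (\<Sum>j. (1/2::real)^j)"
    by (intro sum_le_suminf summable_geometric) auto
  also have "\<dots> = 2" using suminf_geometric[of "1/2::real"] by simp
  finally show ?thesis .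
qed


lemma ps2_nonneg: "0 \<le> ps2 M d" unfolding ps2_def by (intro sum_nonneg) (auto simp: wt_nonneg)

lemma weighted_half:
  fixes x :: "nat \<Rightarrow> complex"
  assumes "finite S"
  shows "norm (\<Sum>j\<in>S. x j)^2 \<le> 2 * (\<Sum>j\<in>S. 2^j * norm (x j)^2)"
proof -
  have "norm (\<Sum>j\<in>S. x j)^2 \<le> (\<Sum>j\<in>S. 1 / 2^j) * (\<Sum>j\<in>S. 2^j * norm (x j)^2)"
    by (rule norm_sum_sq_weighted) auto
  also have "(\<Sum>j\<in>S. 1 / (2::real)^j) = (\<Sum>j\<in>S. (1/2)^j)" by (simp add: power_one_over)
  also have "\<dots> * (\<Sum>j\<in>S. 2^j * norm (x j)^2) \<le> 2 * (\<Sum>j\<in>S. 2^j * norm (x j)^2)"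
    using geo_half[OF assms] by (intro mult_right_mono sum_nonneg) auto
  finally show ?thesis .
qed

lemma ps2_sum_weighted:
  fixes x :: "nat \<Rightarrow> nat \<Rightarrow> complex"
  assumes "finite S"
  shows "ps2 M (\<lambda>e. \<Sum>j\<in>S. x j e) \<le> 2 * (\<Sum>j\<in>S. 2^j * ps2 M (x j))"
proof -
  have "ps2 M (\<lambda>e. \<Sum>j\<in>S. x j e) \<le> (\<Sum>e<M. 2 * (\<Sum>j\<in>S. 2^j * norm (x j e)^2) * wt e)"
    unfolding ps2_def by (intro sum_mono mult_right_mono weighted_half assms) (auto simp: wt_nonneg)
  also have "\<dots> = 2 * (\<Sum>j\<in>S. 2^j * ps2 M (x j))"
    by (simp add: ps2_def sum_distrib_left sum_distrib_right sum.swap[of _ S] mult_ac)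
  finally show ?thesis .
qed

lemma ps2_Z: "ps2 M (Sh a (Y j)) \<le> CY j * wt (3 * 2^a)"
  unfolding CY_def by (rule Sh_bound) (use Y_supp in blast)

lemma FF_bound: "ps2 M FF \<le> 4"
proof -
  have "ps2 M FF = ps2 M (\<lambda>e. \<Sum>j<M. Z j e)"
    unfolding ps2_def by (intro sum.cong refl) (subst FF_eq[of "{..<M}"], auto)
  also have "\<dots> \<le> 2 * (\<Sum>j<M. 2^j * ps2 M (Z j))" by (rule ps2_sum_weighted) simp
  also have "\<dots> \<le> 2 * (\<Sum>j<M. (1/2::real)^j)"
  proof (intro mult_left_mono sum_mono)
    fix j
    have "2^j * ps2 M (Z j) \<le> 2^j * (CY j * wt (3 * 2^nn j))"
      unfolding Z_def by (intro mult_left_mono ps2_Z) auto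
    also have "\<dots> \<le> (1/4)^j"
      using G2_use[of j "nn j"] nn_ge_gap[of j] by (simp add: gap_def mult_ac)
    also have "\<dots> \<le> (1/2)^j" by (intro power_mono) auto
    finally show "2^j * ps2 M (Z j) \<le> (1/2)^j" .
  qed auto
  also have "\<dots> \<le> 2 * 2" using geo_half[of "{..<M}"] by simp
  finally show ?thesis by simp
qed

lemma FF_summable: "summable (\<lambda>n. norm (FF n)^2 * wt n)"
  by (rule summableI_nonneg_bounded[where x=4]) (auto simp: wt_nonneg FF_bound[unfolded ps2_def])


lemma norm3: "norm (x + y + z :: complex)^2 \<le> 3 * (norm x^2 + norm y^2 + norm z^2)"
proof -
  have "norm (x + y + z) \<le> norm x + norm y + norm z" by (meson norm_triangle_le order.refl add_mono)
  then have "norm (x + y + z)^2 \<le> (norm x + norm y + norm z)^2" by (intro power_mono) auto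
  also have "\<dots> \<le> 3 * (norm x^2 + norm y^2 + norm z^2)"
    using sum_squared_le_sum_of_squares[of "\<lambda>i. [norm x, norm y, norm z] ! i" "{0,1,2::nat}"]
    by (simp add: numeral_3_eq_3 mult.commute) (simp add: add.assoc)
  finally show ?thesis .
qed

lemma cutq_sum: "cutq (\<lambda>m. \<Sum>i\<in>S. x i m) m = (\<Sum>i\<in>S. cutq (x i) m)"
  by (simp add: cutq_def)

lemma qs_sum_card:
  fixes x :: "nat \<Rightarrow> nat \<Rightarrow> complex"
  shows "qs M (\<lambda>m. \<Sum>i\<in>S. x i m) \<le> real (card S) * (\<Sum>i\<in>S. qs M (x i))"
proof -
  have "qs M (\<lambda>m. \<Sum>i\<in>S. x i m) \<le> (\<Sum>m<M. real (card S) * (\<Sum>i\<in>S. norm (cutq (x i) m)^2) * wt m)"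
    unfolding qs_def cutq_sum by (intro sum_mono mult_right_mono norm_sum_sq_card) (auto simp: wt_nonneg)
  also have "\<dots> = real (card S) * (\<Sum>i\<in>S. qs M (x i))"
    by (simp add: qs_def sum_distrib_left sum_distrib_right sum.swap[of _ S] mult_ac)
  finally show ?thesis .
qed

lemma main_est:
  assumes H: "\<forall>C. collatz_cycle C \<and> C \<subseteq> {0<..} \<longrightarrow> C = {1, 2}"
  shows "qs M (\<lambda>m. (Top ^^ nn J) FF m - c m) \<le> 3 * (real J * real J * eta J + qs M (\<lambda>m. Y J m - c m) + 4 * (1/2)^J)"
proof -
  define N where "N = nn J"
  define R where "R = 2^N * M"
  define A where "A m = (\<Sum>i<J. (Top ^^ (N - nn i)) (Y i) m)" for m
  define B where "B m = (\<Sum>j\<in>{J<..R}. Sh (nn j - N) (Y j) m)" for m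
  have pw: "(Top ^^ N) FF m = A m + Y J m + B m" if m: "m < M" for m
  proof -
    have dec: "FF e = (\<Sum>j<J. Z j e) + Z J e + (\<Sum>j\<in>{J<..R}. Z j e)" if e: "e \<in> preN N m" for e
    proof -
      have "e \<le> 2^N * m" using funpow_ge[of e N] e by (simp add: preN_def)
      also have "\<dots> \<le> R" using m by (simp add: R_def)
      finally have eR: "e \<le> R" .
      have "FF e = (\<Sum>j\<in>{..<J} \<union> {J} \<union> {J<..R}. Z j e)"
        by (rule FF_eq) (use eR in auto)
      also have "\<dots> = (\<Sum>j<J. Z j e) + Z J e + (\<Sum>j\<in>{J<..R}. Z j e)"
        by (subst sum.union_disjoint, auto)+
      finally show ?thesis .
    qed
    have "(Top ^^ N) FF m = (\<Sum>e\<in>preN N m. (\<Sum>j<J. Z j e) + Z J e + (\<Sum>j\<in>{J<..R}. Z j e))"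
      unfolding TopN by (intro sum.cong refl dec)
    also have "\<dots> = (\<Sum>j<J. (Top ^^ N) (Z j) m) + (Top ^^ N) (Z J) m + (\<Sum>j\<in>{J<..R}. (Top ^^ N) (Z j) m)"
      by (simp add: TopN sum.distrib sum.swap[of _ "preN N m"])
    also have "(\<Sum>j<J. (Top ^^ N) (Z j) m) = A m"
      unfolding A_def Z_def
      by (intro sum.cong refl) (simp add: TopN_Sh_ge nn_mono N_def)
    also have "(Top ^^ N) (Z J) m = Y J m"
      by (simp add: Z_def TopN_Sh_ge N_def)
    also have "(\<Sum>j\<in>{J<..R}. (Top ^^ N) (Z j) m) = B m"
      unfolding B_def Z_def
      by (intro sum.cong refl) (simp add: TopN_Sh nn_mono N_def)
    finally show ?thesis .
  qed
  have pw2: "norm (cutq (\<lambda>m. (Top ^^ N) FF m - c m) m)^2 * wt m \<le>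
      3 * (norm (cutq A m)^2 * wt m + norm (cutq (\<lambda>m. Y J m - c m) m)^2 * wt m + norm (cutq B m)^2 * wt m)"
    if "m < M" for m
  proof -
    have ceq: "cutq (\<lambda>m. (Top ^^ N) FF m - c m) m = cutq A m + cutq (\<lambda>m. Y J m - c m) m + cutq B m"
      using pw[OF that] by (simp add: cutq_def)
    have "norm (cutq (\<lambda>m. (Top ^^ N) FF m - c m) m)^2 \<le> 3 * (norm (cutq A m)^2 + norm (cutq (\<lambda>m. Y J m - c m) m)^2 + norm (cutq B m)^2)"
      unfolding ceq by (rule norm3)
    then have "norm (cutq (\<lambda>m. (Top ^^ N) FF m - c m) m)^2 * wt m \<le>
       3 * (norm (cutq A m)^2 + norm (cutq (\<lambda>m. Y J m - c m) m)^2 + norm (cutq B m)^2) * wt m"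
      by (rule mult_right_mono[OF _ wt_nonneg])
    then show ?thesis by (simp only: distrib_left distrib_right mult.assoc)
  qed
  have step1: "qs M (\<lambda>m. (Top ^^ N) FF m - c m) \<le> 3 * (qs M A + qs M (\<lambda>m. Y J m - c m) + qs M B)"
  proof -
    have "qs M (\<lambda>m. (Top ^^ N) FF m - c m) \<le> (\<Sum>m<M. 3 * (norm (cutq A m)^2 * wt m + norm (cutq (\<lambda>m. Y J m - c m) m)^2 * wt m + norm (cutq B m)^2 * wt m))"
      unfolding qs_def by (intro sum_mono pw2) auto
    also have "\<dots> = 3 * (qs M A + qs M (\<lambda>m. Y J m - c m) + qs M B)"
      by (simp add: qs_def sum.distrib sum_distrib_left)
    finally show ?thesis .
  qed
  have qA: "qs M A \<le> real J * real J * eta J"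
  proof -
    have "qs M A \<le> real (card {..<J}) * (\<Sum>i<J. qs M ((Top ^^ (N - nn i)) (Y i)))"
      unfolding A_def by (rule qs_sum_card)
    also have "\<dots> \<le> real J * (\<Sum>i<J. eta J)"
    proof (intro mult_mono sum_mono)
      fix i assume i: "i \<in> {..<J}"
      have "qs M ((Top ^^ (N - nn i)) (Y i)) \<le> Rf (DD i) (Y i) (N - nn i)"
        by (rule CSfin) (use Y_supp in blast)
      also have "\<dots> \<le> eta J"
      proof -
        have "K0 i (eta J) \<le> (\<Sum>i<J. K0 i (eta J))" using i by (intro member_le_sum) auto
        also have "\<dots> \<le> gap J" unfolding gap_def by simp
        also have "gap J \<le> N - nn i" using nn_diff[of i J] i by (simp add: N_def)
        finally have "K0 i (eta J) \<le> N - nn i" .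
        moreover have "0 < eta J" by (simp add: eta_def)
        ultimately show ?thesis using K0_spec[OF H] by blast
      qed
      finally show "qs M ((Top ^^ (N - nn i)) (Y i)) \<le> eta J" .
    qed (auto simp: eta_def intro: sum_nonneg qs_nonneg)
    finally show ?thesis by simp
  qed
  have qB: "qs M B \<le> 4 * (1/2)^J"
  proof -
    have "qs M B \<le> ps2 M B" by (rule qs_le_ps2)
    also have "\<dots> \<le> 2 * (\<Sum>j\<in>{J<..R}. 2^j * ps2 M (Sh (nn j - N) (Y j)))"
      unfolding B_def by (rule ps2_sum_weighted) simp
    also have "\<dots> \<le> 2 * (\<Sum>j\<in>{J<..R}. (1/2)^J * (1/2)^j)"
    proof (intro mult_left_mono sum_mono)
      fix j assume j: "j \<in> {J<..R}"
      have "2^j * ps2 M (Sh (nn j - N) (Y j)) \<le> 2^j * (CY j * wt (3 * 2^(nn j - N)))"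
        by (intro mult_left_mono ps2_Z) auto
      also have "\<dots> \<le> (1/4)^j"
      proof -
        have "G2 j \<le> gap j" by (simp add: gap_def)
        also have "gap j \<le> nn j - N" using nn_diff[of J j] j by (simp add: N_def)
        finally show ?thesis using G2_use[of j "nn j - N"] by (simp add: mult_ac)
      qed
      also have "(1/4::real)^j = (1/2)^j * (1/2)^j" by (simp add: power_mult_distrib[symmetric])
      also have "\<dots> \<le> (1/2)^J * (1/2)^j"
        using j by (intro mult_right_mono power_decreasing) auto
      finally show "2^j * ps2 M (Sh (nn j - N) (Y j)) \<le> (1/2)^J * (1/2)^j" .
    qed auto
    also have "\<dots> = 2 * (1/2)^J * (\<Sum>j\<in>{J<..R}. (1/2)^j)"
      by (simp add: sum_distrib_left mult.assoc)
    also have "\<dots> \<le> 2 * (1/2)^J * 2"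
      by (intro mult_left_mono geo_half) auto
    finally show ?thesis by simp
  qed
  have "3 * (qs M A + qs M (\<lambda>m. Y J m - c m) + qs M B) \<le> 3 * (real J * real J * eta J + qs M (\<lambda>m. Y J m - c m) + 4 * (1/2)^J)"
    using qA qB by (intro mult_left_mono add_mono) auto
  with step1 show ?thesis unfolding N_def by (rule order_trans)
qed


lemma Y_enc: "Y (prod_encode (to_nat L, k)) = ylist L"
  by (simp add: Y_def Ylst_def)

lemma seq_main:
  assumes H: "\<forall>C. collatz_cycle C \<and> C \<subseteq> {0<..} \<longrightarrow> C = {1, 2}"
    and sm: "summable (\<lambda>n. norm (c n)^2 * wt n)" and \<epsilon>: "0 < \<epsilon>"
  shows "\<exists>N. \<forall>M. qs M (\<lambda>m. (Top ^^ N) FF m - c m) \<le> \<epsilon>"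
proof -
  obtain L where L: "\<forall>M. qs M (\<lambda>m. ylist L m - c m) \<le> \<epsilon>/9"
    using density[OF sm, of "\<epsilon>/9"] \<epsilon> by auto
  obtain J0 :: nat where J0: "45 / \<epsilon> < real J0" using reals_Archimedean2 by blast
  define J where "J = prod_encode (to_nat L, J0)"
  have JJ0: "J0 \<le> J" unfolding J_def by (rule le_prod_encode_2)
  have YJ: "Y J = ylist L" by (simp add: J_def Y_enc)
  have inv: "1 / (real J + 1) \<le> \<epsilon> / 45"
  proof -
    have "45 / \<epsilon> < real J + 1" using J0 JJ0 by linarith
    then have "45 < \<epsilon> * (real J + 1)" using \<epsilon> by (simp add: field_simps)
    then show ?thesis using \<epsilon> by (simp add: field_simps)
  qed
  have t1: "real J * real J * eta J \<le> 1 / (real J + 1)"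
  proof -
    have "real J * real J \<le> (real J + 1)^2" by (simp add: power2_eq_square mult_mono)
    then have "real J * real J / (real J + 1)^3 \<le> (real J + 1)^2 / (real J + 1)^3"
      by (intro divide_right_mono) auto
    also have "\<dots> = 1 / (real J + 1)" by (simp add: power2_eq_square power3_eq_cube)
    finally show ?thesis by (simp add: eta_def)
  qed
  have t2: "(1/2::real)^J \<le> 1 / (real J + 1)"
  proof -
    have "real J + 1 \<le> 2^J" using less_exp[of J] by (metis Suc_leI of_nat_Suc of_nat_le_iff of_nat_numeral of_nat_power add.commute)
    then show ?thesis by (simp add: power_one_over field_simps)
  qed
  show ?thesis
  proof (intro exI allI)
    fix M
    have "qs M (\<lambda>m. (Top ^^ nn J) FF m - c m) \<le> 3 * (real J * real J * eta J + qs M (\<lambda>m. Y J m - c m) + 4 * (1/2)^J)"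
      by (rule main_est[OF H])
    also have "\<dots> \<le> 3 * (\<epsilon>/45 + \<epsilon>/9 + 4 * (\<epsilon>/45))"
      using t1 t2 inv L YJ by (intro mult_left_mono add_mono) auto
    also have "\<dots> \<le> \<epsilon>" using \<epsilon> by simp
    finally show "qs M (\<lambda>m. (Top ^^ nn J) FF m - c m) \<le> \<epsilon>" .
  qed
qed


lemma iter_op:
  assumes "f holomorphic_on ball 0 1"
  shows "(collatz_op ^^ N) f holomorphic_on ball 0 1 \<and> taylor_coeff ((collatz_op ^^ N) f) = (Top ^^ N) (taylor_coeff f)"
proof (induction N)
  case 0 then show ?case using assms by simp
next
  case (Suc N)
  then have h: "(collatz_op ^^ N) f holomorphic_on ball 0 1" by blast
  show ?case using collatz_op_step[OF h] Suc by simp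
qed

lemma poly_sums:
  fixes a b c z :: complex
  shows "(\<lambda>m. (if m = 0 then a else if m = 1 then b else if m = 2 then c else 0) * z^m) sums (a + b * z + c * z^2)"
proof -
  have "(\<lambda>m. (if m = 0 then a else if m = 1 then b else if m = 2 then c else 0) * z^m) sums
      (\<Sum>m\<in>{0,1,2::nat}. (if m = 0 then a else if m = 1 then b else if m = 2 then c else 0) * z^m)"
    by (rule sums_finite) auto
  then show ?thesis by (simp add: power2_eq_square add.assoc)
qed

lemma berg_nonneg: "0 \<le> berg_norm h"
proof -
  have "0 \<le> integral (ball 0 1) (\<lambda>z. (cmod (h z))^2)"
    by (cases "(\<lambda>z. (cmod (h z))^2) integrable_on ball 0 1") (auto simp: integral_nonneg not_integrable_integral)
  then show ?thesis by (simp add: berg_norm_def)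
qed

theorem mainTheorem2:
  assumes "\<forall>C. collatz_cycle C \<and> C \<subseteq> {0<..} \<longrightarrow> C = {1, 2}"
  shows "\<exists>f \<in> bergman. \<forall>g \<in> bergman. \<forall>\<epsilon> > 0.
           \<exists>n. quot_dist ((collatz_op ^^ n) f) g < \<epsilon>"
proof -
  note H = assms
  have crF: "1 \<le> conv_radius FF" by (rule L2_conv[OF FF_summable])
  define f where "f = ps FF"
  have fholo: "f holomorphic_on ball 0 1" unfolding f_def by (rule ps_holo[OF crF])
  have fint: "((\<lambda>z. (cmod (f z))^2) has_integral (\<Sum>n. norm (FF n)^2 * wt n)) (ball 0 1)"
    by (rule ps_has_integral[OF crF _ FF_summable]) (simp add: f_def)
  have fB: "f \<in> bergman" using fholo fint by (auto simp: bergman_def)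
  have tf: "taylor_coeff f = FF" by (rule taylor_of_ps[OF crF]) (simp add: f_def)
  show ?thesis
  proof (intro bexI[OF _ fB] ballI allI impI)
    fix g :: "complex \<Rightarrow> complex" and \<epsilon> :: real
    assume gB: "g \<in> bergman" and \<epsilon>: "0 < \<epsilon>"
    have gholo: "g holomorphic_on ball 0 1" and gint: "(\<lambda>z. (cmod (g z))^2) integrable_on ball 0 1"
      using gB by (auto simp: bergman_def)
    define c where "c = taylor_coeff g"
    have crc: "1 \<le> conv_radius c" unfolding c_def by (rule taylor_conv[OF gholo])
    have geq: "\<And>z. z \<in> ball 0 1 \<Longrightarrow> g z = ps c z" unfolding c_def by (rule taylor_ps[OF gholo])
    have smc: "summable (\<lambda>n. norm (c n)^2 * wt n)" by (rule ps_integrable_summable[OF crc geq gint])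
    define \<epsilon>' where "\<epsilon>' = (\<epsilon>/2)^2"
    have \<epsilon>': "0 < \<epsilon>'" using \<epsilon> by (simp add: \<epsilon>'_def)
    obtain N where N: "\<forall>M. qs M (\<lambda>m. (Top ^^ N) FF m - c m) \<le> \<epsilon>'"
      using seq_main[OF H smc \<epsilon>'] by blast
    define u where "u = (collatz_op ^^ N) f"
    have uholo: "u holomorphic_on ball 0 1" and tu: "taylor_coeff u = (Top ^^ N) FF"
      using iter_op[OF fholo, of N] tf by (auto simp: u_def)
    define x where "x = (Top ^^ N) FF"
    have crx: "1 \<le> conv_radius x" using taylor_conv[OF uholo] tu by (simp add: x_def)
    have ueq: "\<And>z. z \<in> ball 0 1 \<Longrightarrow> u z = ps x z" using taylor_ps[OF uholo] tu by (simp add: x_def)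
    define d where "d = cutq (\<lambda>m. x m - c m)"
    define pc :: "nat \<Rightarrow> complex" where "pc m = (if m = 0 then x 0 - c 0 else if m = 1 then x 1 - c 1 else if m = 2 then x 2 - c 2 else 0)" for m
    define p where "p z = (x 0 - c 0) + (x 1 - c 1) * z + (x 2 - c 2) * z^2" for z
    have pX: "p \<in> polyX" unfolding polyX_def p_def by blast
    have dsm: "summable (\<lambda>n. norm (d n)^2 * wt n)"
      by (rule summableI_nonneg_bounded[where x=\<epsilon>']) (use N in \<open>auto simp: wt_nonneg qs_def d_def x_def\<close>)
    have dle: "(\<Sum>n. norm (d n)^2 * wt n) \<le> \<epsilon>'"
      by (rule suminf_le_const[OF dsm]) (use N in \<open>auto simp: qs_def d_def x_def\<close>)
    have crd: "1 \<le> conv_radius d" by (rule L2_conv[OF dsm])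
    define h where "h z = u z - g z - p z" for z
    have heq: "h z = ps d z" if z: "z \<in> ball 0 1" for z
    proof -
      have nz: "norm z < 1" using z by simp
      have s1: "(\<lambda>m. x m * z^m) sums u z" using ps_sums[OF cr_lt[OF crx nz]] ueq[OF z] by simp
      have s2: "(\<lambda>m. c m * z^m) sums g z" using ps_sums[OF cr_lt[OF crc nz]] geq[OF z] by simp
      have s3: "(\<lambda>m. pc m * z^m) sums p z" unfolding pc_def p_def by (rule poly_sums)
      have "(\<lambda>m. x m * z^m - c m * z^m - pc m * z^m) sums (u z - g z - p z)"
        by (intro sums_diff s1 s2 s3)
      moreover have "(\<lambda>m. x m * z^m - c m * z^m - pc m * z^m) = (\<lambda>m. d m * z^m)"
        by (auto simp: fun_eq_iff d_def cutq_def pc_def algebra_simps)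
      ultimately have "(\<lambda>m. d m * z^m) sums h z" by (simp add: h_def)
      moreover have "(\<lambda>m. d m * z^m) sums ps d z" by (rule ps_sums[OF cr_lt[OF crd nz]])
      ultimately show ?thesis by (rule sums_unique2)
    qed
    have hint: "((\<lambda>z. (cmod (h z))^2) has_integral (\<Sum>n. norm (d n)^2 * wt n)) (ball 0 1)"
      by (rule ps_has_integral[OF crd heq dsm])
    have bn: "berg_norm h \<le> \<epsilon>/2"
    proof -
      have "berg_norm h = sqrt (\<Sum>n. norm (d n)^2 * wt n)"
        using hint by (simp add: berg_norm_def integral_unique)
      also have "\<dots> \<le> sqrt \<epsilon>'" using dle by simp
      also have "\<dots> = \<epsilon>/2" using \<epsilon> by (simp add: \<epsilon>'_def)
      finally show ?thesis .
    qed
    have "quot_dist u g \<le> berg_norm h"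
      unfolding quot_dist_def
    proof (rule cInf_lower)
      show "berg_norm h \<in> {berg_norm (\<lambda>z. u z - g z - p z) | p. p \<in> polyX}"
        using pX by (auto simp: h_def[abs_def])
      show "bdd_below {berg_norm (\<lambda>z. u z - g z - p z) | p. p \<in> polyX}"
        by (rule bdd_belowI[of _ 0]) (auto simp: berg_nonneg)
    qed
    with bn \<epsilon> have "quot_dist u g < \<epsilon>" by linarith
    then show "\<exists>n. quot_dist ((collatz_op ^^ n) f) g < \<epsilon>" unfolding u_def by blast
  qed
qed


end
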